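(* Let $(V,\ell)$ be an $N$-strict $L_\infty$-algebra with finite-dimensional components, $V_0=\mathbb{R}^n$, with $H^1(V,\ell)=0$, and let $h_1,h_2$, the norms and $\alpha_\ell$ be as in the context. Then for every $u_1\in\ker(\ell_1|_{V_0})$ with $\|u_1\|<\frac1{12\|h_1\|\alpha_\ell}$ there exists a deformation $u_t:[0,2)\to MC(V,\ell)\subset\mathbb{R}^n$ of $0$ by Maurer–Cartan elements with $\partial_{t=0}u_t=u_1$.
   Context: An $L_\infty$-algebra is a sequence $\ell=(\ell_k)_{k\geq0}$ of graded symmetric $k$-linear degree-$1$ maps $\ell_k:V^{\times k}\to V$, $\ell_0=0$, satisfying the $L_\infty$ Jacobi identities; it is $N$-strict if $\ell_k=0$ for all $k\geq N$. $H^1(V,\ell)=\ker(\ell_1:V_1\to V_2)/\operatorname{im}(\ell_1:V_0\to V_1)$. $h_1:V_1\to V_0$, $h_2:V_2\to V_1$ are linear maps with $\ell_1\circ h_1+h_2\circ\ell_1=\mathrm{id}_{V_1}$. Norms are fixed on $V_0,V_1$; $\|h_1\|$ and $\|\ell_i\|$ (for $\ell_i:V_0^{\times i}\to V_1$) are operator norms, and $\alpha_\ell=\sum_{i=1}^N\frac{\|\ell_i\|}{i!}$. $MC(v)=\sum_{k\geq1}\frac1{k!}\ell_k(v,\ldots,v)$ and $MC(V,\ell)$ is its zero set. A deformation of $0$ is a smooth path starting at $0$ consisting of Maurer–Cartan elements. *)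

theory Defs
  imports "HOL-Analysis.Analysis"
begin

text \<open>A (Z-)graded real vector space is modelled as a family of subspaces Vd d of an
ambient real normed vector space whose sum is direct and spans everything.\<close>

definition graded_space :: "(int \<Rightarrow> 'v::real_vector set) \<Rightarrow> bool" where
  "graded_space Vd \<longleftrightarrow>
     (\<forall>d. subspace (Vd d)) \<and>
     (\<forall>I x. finite I \<longrightarrow> (\<forall>i\<in>I. x i \<in> Vd i) \<longrightarrow> (\<Sum>i\<in>I. x i) = 0 \<longrightarrow> (\<forall>i\<in>I. x i = 0)) \<and>
     span (\<Union>d. Vd d) = UNIV"

definition hom_list :: "(int \<Rightarrow> 'v set) \<Rightarrow> 'v list \<Rightarrow> int list \<Rightarrow> bool" where
  "hom_list Vd xs ds \<longleftrightarrow> length xs = length ds \<and> (\<forall>i<length xs. xs ! i \<in> Vd (ds ! i))"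

definition perm_list :: "(nat \<Rightarrow> nat) \<Rightarrow> 'a list \<Rightarrow> 'a list" where
  "perm_list \<sigma> xs = map (\<lambda>i. xs ! \<sigma> i) [0..<length xs]"

definition koszul_sign :: "int list \<Rightarrow> (nat \<Rightarrow> nat) \<Rightarrow> real" where
  "koszul_sign ds \<sigma> = (-1) ^ card {(p, q). p < q \<and> q < length ds \<and> \<sigma> q < \<sigma> p \<and>
                                            odd (ds ! \<sigma> p * ds ! \<sigma> q)}"

definition unshuffles :: "nat \<Rightarrow> nat \<Rightarrow> (nat \<Rightarrow> nat) set" where
  "unshuffles i n = {\<sigma>. \<sigma> permutes {..<n} \<and>
       (\<forall>p q. p < q \<and> q < i \<longrightarrow> \<sigma> p < \<sigma> q) \<and>
       (\<forall>p q. i \<le> p \<and> p < q \<and> q < n \<longrightarrow> \<sigma> p < \<sigma> q)}"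

text \<open>L-infinity algebra in the shifted (degree 1, graded symmetric) convention;
  l k is the k-ary bracket, applied to lists of length k.\<close>
definition Linf_algebra :: "(int \<Rightarrow> 'v::real_vector set) \<Rightarrow> (nat \<Rightarrow> 'v list \<Rightarrow> 'v) \<Rightarrow> bool" where
  "Linf_algebra Vd l \<longleftrightarrow>
     graded_space Vd \<and>
     l 0 [] = 0 \<and>
     (\<forall>xs i. i < length xs \<longrightarrow> linear (\<lambda>x. l (length xs) (xs[i := x]))) \<and>
     (\<forall>xs ds. hom_list Vd xs ds \<longrightarrow> l (length xs) xs \<in> Vd (sum_list ds + 1)) \<and>
     (\<forall>xs ds \<sigma>. hom_list Vd xs ds \<longrightarrow> \<sigma> permutes {..<length xs} \<longrightarrow>
        l (length xs) (perm_list \<sigma> xs) = koszul_sign ds \<sigma> *\<^sub>R l (length xs) xs) \<and>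
     (\<forall>xs ds. hom_list Vd xs ds \<longrightarrow> length xs \<ge> 1 \<longrightarrow>
        (\<Sum>i\<in>{1..length xs}. \<Sum>\<sigma>\<in>unshuffles i (length xs).
           koszul_sign ds \<sigma> *\<^sub>R
             l (length xs - i + 1) (l i (take i (perm_list \<sigma> xs)) # drop i (perm_list \<sigma> xs))) = 0)"

definition opnorm_on :: "'a::real_normed_vector set \<Rightarrow> ('a \<Rightarrow> 'b::real_normed_vector) \<Rightarrow> real" where
  "opnorm_on S f = Sup {norm (f x) | x. x \<in> S \<and> norm x \<le> 1}"

definition multi_opnorm_on :: "'a::real_normed_vector set \<Rightarrow> nat \<Rightarrow> ('a list \<Rightarrow> 'b::real_normed_vector) \<Rightarrow> real" where
  "multi_opnorm_on S k f =
     Sup {norm (f xs) | xs. length xs = k \<and> set xs \<subseteq> S \<and> (\<forall>x\<in>set xs. norm x \<le> 1)}"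

definition alpha_l :: "(int \<Rightarrow> 'v::real_normed_vector set) \<Rightarrow> (nat \<Rightarrow> 'v list \<Rightarrow> 'v) \<Rightarrow> nat \<Rightarrow> real" where
  "alpha_l Vd l N = (\<Sum>i\<in>{1..N}. multi_opnorm_on (Vd 0) i (l i) / fact i)"

definition MC :: "(nat \<Rightarrow> 'v::real_normed_vector list \<Rightarrow> 'v) \<Rightarrow> 'v \<Rightarrow> 'v" where
  "MC l v = (\<Sum>k. (1 / fact k) *\<^sub>R l k (replicate k v))"

definition Cinf_on :: "real set \<Rightarrow> (real \<Rightarrow> 'a::real_normed_vector) \<Rightarrow> bool" where
  "Cinf_on S u \<longleftrightarrow> (\<exists>D. (\<forall>t\<in>S. D 0 t = u t) \<and>
      (\<forall>k. \<forall>t\<in>S. (D k has_vector_derivative D (Suc k) t) (at t within S)))"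

end

theory Submission
  imports Defs "HOL-Analysis.FPS_Convergence"
begin

lemma sorted_map_upt:
  assumes "\<And>p q. a \<le> p \<Longrightarrow> p < q \<Longrightarrow> q < b \<Longrightarrow> (f p::nat) < f q"
  shows "sorted_wrt (<) (map f [a..<b])"
  unfolding sorted_wrt_iff_nth_less using assms by auto

lemma unshuffle_lists:
  assumes s: "\<sigma> \<in> unshuffles i n" and "i \<le> n"
  shows "map \<sigma> [0..<i] = sorted_list_of_set (\<sigma> ` {..<i})"
    and "map \<sigma> [i..<n] = sorted_list_of_set (\<sigma> ` {i..<n})"
proof -
  from s have m1: "\<And>p q. p < q \<Longrightarrow> q < i \<Longrightarrow> \<sigma> p < \<sigma> q"
    and m2: "\<And>p q. i \<le> p \<Longrightarrow> p < q \<Longrightarrow> q < n \<Longrightarrow> \<sigma> p < \<sigma> q"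
    unfolding unshuffles_def by auto
  have a: "sorted_wrt (<) (map \<sigma> [0..<i])" by (rule sorted_map_upt) (use m1 in auto)
  have b: "sorted_wrt (<) (map \<sigma> [i..<n])" by (rule sorted_map_upt) (use m2 in auto)
  show "map \<sigma> [0..<i] = sorted_list_of_set (\<sigma> ` {..<i})"
    apply (rule sorted_distinct_set_unique)
    using a by (auto simp: strict_sorted_iff atLeast0LessThan)
  show "map \<sigma> [i..<n] = sorted_list_of_set (\<sigma> ` {i..<n})"
    apply (rule sorted_distinct_set_unique)
    using b by (auto simp: strict_sorted_iff)
qed

lemma unshuffle_compl:
  assumes s: "\<sigma> \<in> unshuffles i n" and "i \<le> n"
  shows "\<sigma> ` {i..<n} = {..<n} - \<sigma> ` {..<i}"
proof -
  have p: "\<sigma> permutes {..<n}" using s unfolding unshuffles_def by auto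
  have im: "\<sigma> ` {..<n} = {..<n}" using permutes_image[OF p] .
  have inj: "inj \<sigma>" using permutes_inj[OF p] .
  have u: "{..<n} = {..<i} \<union> {i..<n}" using assms(2) by auto
  have "\<sigma> ` {..<i} \<union> \<sigma> ` {i..<n} = {..<n}" using im u by (metis image_Un)
  moreover have "\<sigma> ` {..<i} \<inter> \<sigma> ` {i..<n} = {}"
    using image_Int[OF inj, of "{..<i}" "{i..<n}"] by auto
  ultimately show ?thesis by blast
qed

lemma card_unshuffles:
  assumes "i \<le> n"
  shows "card (unshuffles i n) = n choose i"
proof -
  let ?T = "{S. S \<subseteq> {..<n} \<and> card S = i}"
  have bij: "bij_betw (\<lambda>\<sigma>. \<sigma> ` {..<i}) (unshuffles i n) ?T"
  proof (rule bij_betwI')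
    fix \<sigma> \<tau> assume s: "\<sigma> \<in> unshuffles i n" and t: "\<tau> \<in> unshuffles i n"
    show "(\<sigma> ` {..<i} = \<tau> ` {..<i}) = (\<sigma> = \<tau>)"
    proof
      assume eq: "\<sigma> ` {..<i} = \<tau> ` {..<i}"
      have e1: "map \<sigma> [0..<i] = map \<tau> [0..<i]"
        using unshuffle_lists(1)[OF s assms] unshuffle_lists(1)[OF t assms] eq by simp
      have e2: "map \<sigma> [i..<n] = map \<tau> [i..<n]"
        using unshuffle_lists(2)[OF s assms] unshuffle_lists(2)[OF t assms] eq
          unshuffle_compl[OF s assms] unshuffle_compl[OF t assms] by simp
      show "\<sigma> = \<tau>"
      proof
        fix p
        show "\<sigma> p = \<tau> p"
        proof (cases "p < i")
          case True then show ?thesis using e1 by (metis map_eq_conv atLeastLessThan_iff set_upt zero_le)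
        next
          case False
          show ?thesis
          proof (cases "p < n")
            case True then show ?thesis using e2 False
              by (metis map_eq_conv atLeastLessThan_iff set_upt not_less)
          next
            case False
            have "\<sigma> permutes {..<n}" "\<tau> permutes {..<n}" using s t unfolding unshuffles_def by auto
            then show ?thesis using False by (simp add: permutes_def)
          qed
        qed
      qed
    qed simp
  next
    fix \<sigma> assume s: "\<sigma> \<in> unshuffles i n"
    have p: "\<sigma> permutes {..<n}" using s unfolding unshuffles_def by auto
    have "\<sigma> ` {..<i} \<subseteq> {..<n}" using permutes_image[OF p] assms by auto
    moreover have "card (\<sigma> ` {..<i}) = i"
      using card_image[OF inj_on_subset[OF permutes_inj[OF p]]] by simp
    ultimately show "\<sigma> ` {..<i} \<in> ?T" by simp
  next
    fix S assume "S \<in> ?T"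
    hence S: "S \<subseteq> {..<n}" "card S = i" by auto
    define xs where "xs = sorted_list_of_set S"
    define ys where "ys = sorted_list_of_set ({..<n} - S)"
    have fS: "finite S" using S(1) finite_subset by blast
    have lx: "length xs = i" using S fS by (simp add: xs_def)
    have ly: "length ys = n - i" using S fS by (simp add: ys_def card_Diff_subset)
    have sx: "sorted_wrt (<) xs" "set xs = S" "distinct xs" using fS by (auto simp: xs_def)
    have sy: "sorted_wrt (<) ys" "set ys = {..<n} - S" "distinct ys" by (auto simp: ys_def)
    define \<sigma> where "\<sigma> = (\<lambda>p. if p < n then (xs @ ys) ! p else p)"
    have lxy: "length (xs @ ys) = n" using lx ly assms by simp
    have dxy: "distinct (xs @ ys)" using sx sy by auto
    have sxy: "set (xs @ ys) = {..<n}" using sx sy S by auto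
    have inj: "inj_on \<sigma> {..<n}"
      unfolding inj_on_def \<sigma>_def using dxy lxy by (auto simp: distinct_conv_nth)
    have img: "\<sigma> ` {..<n} = {..<n}"
    proof -
      have "\<sigma> ` {..<n} = (\<lambda>p. (xs@ys) ! p) ` {..<length (xs@ys)}"
        using lxy by (auto simp: \<sigma>_def)
      also have "\<dots> = set (xs @ ys)" by (auto simp: set_conv_nth)
      finally show ?thesis using sxy by simp
    qed
    have perm: "\<sigma> permutes {..<n}"
      by (rule bij_imp_permutes) (use inj img in \<open>auto simp: bij_betw_def \<sigma>_def\<close>)
    have v1: "\<And>p. p < i \<Longrightarrow> \<sigma> p = xs ! p"
      using lx assms by (auto simp: \<sigma>_def nth_append)
    have v2: "\<And>p. i \<le> p \<Longrightarrow> p < n \<Longrightarrow> \<sigma> p = ys ! (p - i)"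
      using lx by (auto simp: \<sigma>_def nth_append)
    have "\<sigma> \<in> unshuffles i n"
      unfolding unshuffles_def
    proof (intro CollectI conjI allI impI perm)
      fix p q assume "p < q \<and> q < i"
      then show "\<sigma> p < \<sigma> q" using v1 sx(1) lx by (simp add: sorted_wrt_nth_less)
    next
      fix p q assume a: "i \<le> p \<and> p < q \<and> q < n"
      then have "ys ! (p - i) < ys ! (q - i)" using sorted_wrt_nth_less[OF sy(1), of "p-i" "q-i"] ly by auto
      then show "\<sigma> p < \<sigma> q" using v2 a by simp
    qed
    moreover have "\<sigma> ` {..<i} = S"
    proof -
      have "\<sigma> ` {..<i} = (\<lambda>p. xs ! p) ` {..<length xs}" using v1 lx by auto
      also have "\<dots> = set xs" by (auto simp: set_conv_nth)
      finally show ?thesis using sx by simp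
    qed
    ultimately show "\<exists>\<sigma>\<in>unshuffles i n. S = \<sigma> ` {..<i}" by blast
  qed
  have "card (unshuffles i n) = card ?T" using bij_betw_same_card[OF bij] .
  also have "\<dots> = n choose i" using n_subsets[of "{..<n}" i] by simp
  finally show ?thesis .
qed


locale LA =
  fixes Vd :: "int \<Rightarrow> 'v::real_normed_vector set" and l :: "nat \<Rightarrow> 'v list \<Rightarrow> 'v" and N :: nat
  assumes Linf: "Linf_algebra Vd l" and strict: "\<forall>k\<ge>N. \<forall>xs. l k xs = 0"
begin

lemma subsp: "subspace (Vd d)"
  using Linf unfolding Linf_algebra_def graded_space_def by auto

lemma l0: "l 0 [] = 0"
  using Linf unfolding Linf_algebra_def by auto

lemma l_high: "k \<ge> N \<Longrightarrow> l k xs = 0"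
  using strict by auto

lemma lin_slot: "linear (\<lambda>z. l (length pre + Suc (length rest)) (pre @ z # rest))"
proof -
  have i: "length pre < length (pre @ 0 # rest)" by simp
  have "\<forall>xs i. i < length xs \<longrightarrow> linear (\<lambda>x. l (length xs) (xs[i := x]))"
    using Linf unfolding Linf_algebra_def by blast
  then have "linear (\<lambda>x. l (length (pre @ 0 # rest)) ((pre @ 0 # rest)[length pre := x]))"
    using i by blast
  then show ?thesis by simp
qed

lemma lin1: "linear (\<lambda>z. l 1 [z])"
  using lin_slot[of "[]" "[]"] by simp

lemma lin_head: "linear (\<lambda>z. l (Suc (length rest)) (z # rest))"
  using lin_slot[of "[]" rest] by simp

lemma l_zero_slot: "l (length pre + Suc (length rest)) (pre @ 0 # rest) = 0"
  using linear_0[OF lin_slot[of pre rest]] .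

lemma deg: "hom_list Vd xs ds \<Longrightarrow> l (length xs) xs \<in> Vd (sum_list ds + 1)"
  using Linf unfolding Linf_algebra_def by auto

lemma sl0: "sum_list (replicate n (0::int)) = 0"
  by (induction n) auto

lemma deg0: "set xs \<subseteq> Vd 0 \<Longrightarrow> l (length xs) xs \<in> Vd 1"
proof -
  assume a: "set xs \<subseteq> Vd 0"
  have "hom_list Vd xs (replicate (length xs) 0)"
    using a unfolding hom_list_def by (auto simp: nth_mem subsetD)
  from deg[OF this] show ?thesis by (simp add: sl0)
qed

lemma deg1: "y \<in> Vd 1 \<Longrightarrow> set xs \<subseteq> Vd 0 \<Longrightarrow> l (Suc (length xs)) (y # xs) \<in> Vd 2"
proof -
  assume a: "y \<in> Vd 1" "set xs \<subseteq> Vd 0"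
  have "hom_list Vd (y # xs) (1 # replicate (length xs) 0)"
    unfolding hom_list_def
  proof (intro conjI allI impI)
    fix i assume "i < length (y # xs)"
    then show "(y # xs) ! i \<in> Vd ((1 # replicate (length xs) 0) ! i)"
      using a by (cases i) (auto simp: nth_mem subsetD)
  qed simp
  from deg[OF this] show ?thesis by (simp add: sl0)
qed

lemma deg11: "y \<in> Vd 1 \<Longrightarrow> l 1 [y] \<in> Vd 2"
  using deg1[of y "[]"] by simp

lemma expand:
  assumes B: "finite B"
  shows "l (length pre + k) (pre @ replicate k (\<Sum>b\<in>B. x b *\<^sub>R b)) =
    (\<Sum>bs\<in>{bs. set bs \<subseteq> B \<and> length bs = k}. prod_list (map x bs) *\<^sub>R l (length pre + k) (pre @ bs))"
proof (induction k arbitrary: pre)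
  case 0
  have "{bs. set bs \<subseteq> B \<and> length bs = 0} = {[]}" by auto
  then show ?case by simp
next
  case (Suc k)
  let ?v = "\<Sum>b\<in>B. x b *\<^sub>R b"
  let ?L = "\<lambda>k. {bs. set bs \<subseteq> B \<and> length bs = k}"
  have "l (length pre + Suc k) (pre @ replicate (Suc k) ?v)
      = l (length pre + Suc (length (replicate k ?v))) (pre @ ?v # replicate k ?v)" by simp
  also have "\<dots> = (\<Sum>b\<in>B. x b *\<^sub>R l (length pre + Suc k) (pre @ b # replicate k ?v))"
    using linear_sum[OF lin_slot[of pre "replicate k ?v"], of "\<lambda>b. x b *\<^sub>R b" B]
      linear_scale[OF lin_slot[of pre "replicate k ?v"]] by simp
  also have "\<dots> = (\<Sum>b\<in>B. x b *\<^sub>R (\<Sum>bs\<in>?L k. prod_list (map x bs) *\<^sub>R l (length pre + Suc k) (pre @ b # bs)))"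
  proof (rule sum.cong[OF refl])
    fix b
    have "l (length (pre @ [b]) + k) ((pre @ [b]) @ replicate k ?v) =
      (\<Sum>bs\<in>?L k. prod_list (map x bs) *\<^sub>R l (length (pre @ [b]) + k) ((pre @ [b]) @ bs))"
      by (rule Suc.IH)
    then show "x b *\<^sub>R l (length pre + Suc k) (pre @ b # replicate k ?v) =
      x b *\<^sub>R (\<Sum>bs\<in>?L k. prod_list (map x bs) *\<^sub>R l (length pre + Suc k) (pre @ b # bs))"
      by simp
  qed
  also have "\<dots> = (\<Sum>(b,bs)\<in>B \<times> ?L k. prod_list (map x (b # bs)) *\<^sub>R l (length pre + Suc k) (pre @ b # bs))"
    by (simp add: sum.cartesian_product scaleR_sum_right)
  also have "\<dots> = (\<Sum>bs'\<in>?L (Suc k). prod_list (map x bs') *\<^sub>R l (length pre + Suc k) (pre @ bs'))"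
  proof -
    have "?L (Suc k) = (\<lambda>(b,bs). b # bs) ` (B \<times> ?L k)"
    proof
      show "?L (Suc k) \<subseteq> (\<lambda>(b,bs). b # bs) ` (B \<times> ?L k)"
      proof
        fix bs' assume "bs' \<in> ?L (Suc k)"
        then obtain b bs where "bs' = b # bs" "b \<in> B" "bs \<in> ?L k"
          by (cases bs') auto
        then show "bs' \<in> (\<lambda>(b,bs). b # bs) ` (B \<times> ?L k)" by force
      qed
    qed auto
    moreover have "inj_on (\<lambda>(b,bs). b # bs) (B \<times> ?L k)" by (auto simp: inj_on_def)
    ultimately show ?thesis by (simp add: sum.reindex case_prod_unfold)
  qed
  finally show ?case .
qed

lemma expand0:
  assumes "finite B"
  shows "l k (replicate k (\<Sum>b\<in>B. x b *\<^sub>R b)) =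
    (\<Sum>bs\<in>{bs. set bs \<subseteq> B \<and> length bs = k}. prod_list (map x bs) *\<^sub>R l k bs)"
  using expand[OF assms, of "[]" k x] by simp

lemma expand1:
  assumes "finite B"
  shows "l (Suc k) (y # replicate k (\<Sum>b\<in>B. x b *\<^sub>R b)) =
    (\<Sum>bs\<in>{bs. set bs \<subseteq> B \<and> length bs = k}. prod_list (map x bs) *\<^sub>R l (Suc k) (y # bs))"
  using expand[OF assms, of "[y]" k x] by simp

end

context LA begin

lemma perm_rep: "\<sigma> permutes {..<n} \<Longrightarrow> perm_list \<sigma> (replicate n u) = replicate n u"
proof -
  assume p: "\<sigma> permutes {..<n}"
  have "\<forall>i<n. \<sigma> i < n" using permutes_in_image[OF p] by auto
  then show ?thesis unfolding perm_list_def by (auto intro!: nth_equalityI)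
qed

lemma ks_rep: "\<sigma> permutes {..<n} \<Longrightarrow> koszul_sign (replicate n 0) \<sigma> = 1"
proof -
  assume p: "\<sigma> permutes {..<n}"
  have "{(p, q). p < q \<and> q < length (replicate n (0::int)) \<and> \<sigma> q < \<sigma> p \<and>
          odd (replicate n (0::int) ! \<sigma> p * replicate n 0 ! \<sigma> q)} = {}" (is "?S = {}")
    using p permutes_in_image[OF p] by auto
  then show ?thesis unfolding koszul_sign_def by (simp only: card.empty power_0)
qed

lemma jac_rep:
  assumes u: "u \<in> Vd 0" and n: "1 \<le> n"
  shows "(\<Sum>i\<in>{1..n}. real (n choose i) *\<^sub>R l (n - i + 1) (l i (replicate i u) # replicate (n - i) u)) = 0"
proof -
  have hom: "hom_list Vd (replicate n u) (replicate n 0)" using u by (simp add: hom_list_def)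
  have J: "\<forall>xs ds. hom_list Vd xs ds \<longrightarrow> length xs \<ge> 1 \<longrightarrow>
        (\<Sum>i\<in>{1..length xs}. \<Sum>\<sigma>\<in>unshuffles i (length xs).
           koszul_sign ds \<sigma> *\<^sub>R
             l (length xs - i + 1) (l i (take i (perm_list \<sigma> xs)) # drop i (perm_list \<sigma> xs))) = 0"
    using Linf unfolding Linf_algebra_def by blast
  have "(\<Sum>i\<in>{1..n}. \<Sum>\<sigma>\<in>unshuffles i n.
           koszul_sign (replicate n 0) \<sigma> *\<^sub>R
             l (n - i + 1) (l i (take i (perm_list \<sigma> (replicate n u))) # drop i (perm_list \<sigma> (replicate n u)))) = 0"
    using J[rule_format, OF hom] n by simp
  moreover have "(\<Sum>\<sigma>\<in>unshuffles i n.
           koszul_sign (replicate n 0) \<sigma> *\<^sub>R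
             l (n - i + 1) (l i (take i (perm_list \<sigma> (replicate n u))) # drop i (perm_list \<sigma> (replicate n u))))
      = real (n choose i) *\<^sub>R l (n - i + 1) (l i (replicate i u) # replicate (n - i) u)"
    if i: "i \<in> {1..n}" for i
  proof -
    have "(\<Sum>\<sigma>\<in>unshuffles i n.
           koszul_sign (replicate n 0) \<sigma> *\<^sub>R
             l (n - i + 1) (l i (take i (perm_list \<sigma> (replicate n u))) # drop i (perm_list \<sigma> (replicate n u))))
       = (\<Sum>\<sigma>\<in>unshuffles i n. l (n - i + 1) (l i (replicate i u) # replicate (n - i) u))"
    proof (rule sum.cong[OF refl])
      fix \<sigma> assume "\<sigma> \<in> unshuffles i n"
      then have p: "\<sigma> permutes {..<n}" unfolding unshuffles_def by auto
      show "koszul_sign (replicate n 0) \<sigma> *\<^sub>R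
             l (n - i + 1) (l i (take i (perm_list \<sigma> (replicate n u))) # drop i (perm_list \<sigma> (replicate n u)))
          = l (n - i + 1) (l i (replicate i u) # replicate (n - i) u)"
        using i by (simp add: perm_rep[OF p] ks_rep[OF p] min_def)
    qed
    also have "\<dots> = real (card (unshuffles i n)) *\<^sub>R l (n - i + 1) (l i (replicate i u) # replicate (n - i) u)"
      by (rule sum_constant_scaleR)
    also have "\<dots> = real (n choose i) *\<^sub>R l (n - i + 1) (l i (replicate i u) # replicate (n - i) u)"
      using i card_unshuffles[of i n] by simp
    finally show ?thesis .
  qed
  ultimately show ?thesis by simp
qed

lemma MC_fin: "MC l u = (\<Sum>k<N. (1 / fact k) *\<^sub>R l k (replicate k u))"
  unfolding MC_def by (rule suminf_finite) (auto simp: l_high)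

lemma bianchi:
  assumes u: "u \<in> Vd 0"
  shows "(\<Sum>j<N. (1 / fact j) *\<^sub>R l (Suc j) (MC l u # replicate j u)) = 0"
proof -
  define g where "g i j = (1 / (fact i * fact j)) *\<^sub>R l (Suc j) (l i (replicate i u) # replicate j u)" for i j
  have lz: "l (Suc j) (0 # replicate j u) = 0" for j
    using l_zero_slot[of "[]" "replicate j u"] by simp
  have S1: "(\<Sum>i\<le>n. g i (n - i)) = 0" for n
  proof (cases "n = 0")
    case True then show ?thesis by (simp add: g_def l0 lz[of 0, simplified])
  next
    case False
    have e: "{..n} = insert 0 {1..n}" by auto
    have "(\<Sum>i\<le>n. g i (n - i)) = g 0 n + (\<Sum>i\<in>{1..n}. g i (n - i))"
      by (simp add: e)
    also have "g 0 n = 0" by (simp add: g_def l0 lz)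
    also have "(\<Sum>i\<in>{1..n}. g i (n - i)) = (1 / fact n) *\<^sub>R
        (\<Sum>i\<in>{1..n}. real (n choose i) *\<^sub>R l (n - i + 1) (l i (replicate i u) # replicate (n - i) u))"
      unfolding scaleR_sum_right
    proof (rule sum.cong[OF refl])
      fix i assume i: "i \<in> {1..n}"
      have "real (n choose i) = fact n / (fact i * fact (n - i))" using i binomial_fact[of i n] by simp
      then show "g i (n - i) = (1 / fact n) *\<^sub>R (real (n choose i) *\<^sub>R l (n - i + 1) (l i (replicate i u) # replicate (n - i) u))"
        using i by (simp add: g_def Suc_diff_le)
    qed
    also have "\<dots> = 0" using jac_rep[OF u] False by simp
    finally show ?thesis by simp
  qed
  let ?T = "{(i, j). i + j \<le> 2 * N}"
  have S2: "(\<Sum>(i, j)\<in>?T. g i j) = 0"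
    unfolding sum.triangle_reindex_eq using S1 by simp
  have fT: "finite ?T"
    by (rule finite_subset[of _ "{..2*N} \<times> {..2*N}"]) auto
  have S3: "(\<Sum>(i, j)\<in>{..<N} \<times> {..<N}. g i j) = (\<Sum>(i, j)\<in>?T. g i j)"
  proof (rule sum.mono_neutral_left[OF fT])
    show "{..<N} \<times> {..<N} \<subseteq> ?T" by auto
    show "\<forall>x\<in>?T - {..<N} \<times> {..<N}. (case x of (i, j) \<Rightarrow> g i j) = 0"
    proof
      fix x assume x: "x \<in> ?T - {..<N} \<times> {..<N}"
      obtain i j where ij: "x = (i, j)" by (cases x)
      show "(case x of (i, j) \<Rightarrow> g i j) = 0"
      proof (cases "i < N")
        case True
        then have "j \<ge> N" using x ij by auto
        then show ?thesis using ij by (simp add: g_def l_high)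
      next
        case False
        then show ?thesis using ij by (simp add: g_def l_high lz)
      qed
    qed
  qed
  have S4: "(\<Sum>(i, j)\<in>{..<N} \<times> {..<N}. g i j) =
      (\<Sum>j<N. (1 / fact j) *\<^sub>R l (Suc j) (MC l u # replicate j u))"
  proof -
    have "(\<Sum>(i, j)\<in>{..<N} \<times> {..<N}. g i j) = (\<Sum>i<N. \<Sum>j<N. g i j)"
      by (rule sum.cartesian_product[symmetric])
    also have "\<dots> = (\<Sum>j<N. \<Sum>i<N. g i j)"
      by (rule sum.swap)
    also have "\<dots> = (\<Sum>j<N. (1 / fact j) *\<^sub>R l (Suc j) (MC l u # replicate j u))"
    proof (rule sum.cong[OF refl])
      fix j
      have lin: "linear (\<lambda>z. l (Suc j) (z # replicate j u))"
        using lin_head[of "replicate j u"] by simp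
      have "l (Suc j) (MC l u # replicate j u) =
          (\<Sum>i<N. (1 / fact i) *\<^sub>R l (Suc j) (l i (replicate i u) # replicate j u))"
        unfolding MC_fin linear_sum[OF lin] linear_scale[OF lin] by simp
      then show "(\<Sum>i<N. g i j) = (1 / fact j) *\<^sub>R l (Suc j) (MC l u # replicate j u)"
        by (simp add: g_def scaleR_sum_right mult.commute)
    qed
    finally show ?thesis .
  qed
  show ?thesis using S2 S3 S4 by simp
qed

end

definition lsts :: "'b set \<Rightarrow> nat \<Rightarrow> 'b list set" where
  "lsts B k = {bs. set bs \<subseteq> B \<and> length bs = k}"

lemma finite_lsts: "finite B \<Longrightarrow> finite (lsts B k)"
  unfolding lsts_def using finite_lists_length_eq by auto

lemma Xpow_dvd_nth: "fps_X ^ k dvd (f :: real fps) \<Longrightarrow> i < k \<Longrightarrow> fps_nth f i = 0"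
  by (auto simp: dvd_def fps_X_power_mult_nth)

lemma nth_Xpow_dvd: "(\<And>i. i < k \<Longrightarrow> fps_nth (f :: real fps) i = 0) \<Longrightarrow> fps_X ^ k dvd f"
proof -
  assume a: "\<And>i. i < k \<Longrightarrow> fps_nth f i = 0"
  have "f = fps_X ^ k * fps_shift k f"
    by (rule fps_ext) (auto simp: fps_X_power_mult_nth a)
  then show ?thesis by (metis dvd_triv_left)
qed

lemma dvd_prod_list:
  "(\<And>b. b \<in> set bs \<Longrightarrow> fps_X dvd (F b :: real fps)) \<Longrightarrow> fps_X ^ length bs dvd prod_list (map F bs)"
  by (induction bs) (auto intro: mult_dvd_mono)

lemma dvd_prod_list_diff:
  assumes "bs \<noteq> []"
    and "\<And>b. b \<in> set bs \<Longrightarrow> fps_X dvd (F b :: real fps)"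
    and "\<And>b. b \<in> set bs \<Longrightarrow> fps_X dvd (G b :: real fps)"
    and "\<And>b. b \<in> set bs \<Longrightarrow> fps_X ^ p dvd (F b - G b)"
  shows "fps_X ^ (p + length bs - 1) dvd (prod_list (map F bs) - prod_list (map G bs))"
  using assms
proof (induction bs)
  case Nil then show ?case by simp
next
  case (Cons b bs)
  show ?case
  proof (cases "bs = []")
    case True then show ?thesis using Cons.prems by simp
  next
    case False
    have IH: "fps_X ^ (p + length bs - 1) dvd (prod_list (map F bs) - prod_list (map G bs))"
      using Cons False by simp
    have e: "prod_list (map F (b # bs)) - prod_list (map G (b # bs)) =
       F b * (prod_list (map F bs) - prod_list (map G bs)) + (F b - G b) * prod_list (map G bs)"
      by (simp add: algebra_simps)
    have n: "p + length (b # bs) - 1 = Suc (p + length bs - 1)" using False by (cases bs) auto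
    have d1: "fps_X ^ (p + length (b # bs) - 1) dvd F b * (prod_list (map F bs) - prod_list (map G bs))"
      unfolding n power_Suc using IH Cons.prems(2) by (intro mult_dvd_mono) auto
    have d2: "fps_X ^ p * fps_X ^ length bs dvd (F b - G b) * prod_list (map G bs)"
      using Cons.prems dvd_prod_list[of bs G] by (intro mult_dvd_mono) auto
    have "fps_X ^ (p + length (b # bs) - 1) = fps_X ^ p * fps_X ^ length bs"
      by (simp add: power_add)
    with d1 d2 show ?thesis unfolding e by (metis dvd_add)
  qed
qed

definition nrm :: "nat \<Rightarrow> real \<Rightarrow> real fps \<Rightarrow> real" where
  "nrm P r f = (\<Sum>n\<le>P. \<bar>fps_nth f n\<bar> * r ^ n)"

lemma nrm_nonneg: "r \<ge> 0 \<Longrightarrow> nrm P r f \<ge> 0"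
  unfolding nrm_def by (intro sum_nonneg) auto

lemma nrm_add: "r \<ge> 0 \<Longrightarrow> nrm P r (f + g) \<le> nrm P r f + nrm P r g"
  unfolding nrm_def sum.distrib[symmetric]
  by (intro sum_mono) (auto simp: distrib_right[symmetric] intro!: mult_right_mono abs_triangle_ineq)

lemma nrm_diff: "r \<ge> 0 \<Longrightarrow> nrm P r (f - g) \<le> nrm P r f + nrm P r g"
  unfolding nrm_def sum.distrib[symmetric]
  by (intro sum_mono) (auto simp: distrib_right[symmetric] intro!: mult_right_mono abs_triangle_ineq4)

lemma nrm_sum: "r \<ge> 0 \<Longrightarrow> nrm P r (sum f I) \<le> (\<Sum>i\<in>I. nrm P r (f i))"
proof (induction I rule: infinite_finite_induct)
  case (infinite A) then show ?case by (simp add: nrm_def)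
next
  case empty then show ?case by (simp add: nrm_def)
next
  case (insert x F)
  then show ?case using nrm_add[of r P "f x" "sum f F"] by simp
qed

lemma nrm_cmult: "nrm P r (fps_const c * f) = \<bar>c\<bar> * nrm P r f"
  unfolding nrm_def by (simp add: sum_distrib_left abs_mult mult.assoc)

lemma nrm_1: "nrm P r 1 = 1"
proof -
  have "nrm P r 1 = (\<Sum>n\<in>{..P}. if n = 0 then 1 else 0)"
    unfolding nrm_def by (rule sum.cong) (auto simp: fps_one_nth)
  also have "\<dots> = 1" by (subst sum.delta) auto
  finally show ?thesis .
qed

lemma nrm_X: "r \<ge> 0 \<Longrightarrow> nrm P r (fps_const c * fps_X) \<le> \<bar>c\<bar> * r"
proof -
  assume r: "r \<ge> 0"
  have "nrm P r (fps_const c * fps_X) = (\<Sum>n\<le>P. (if n = 1 then \<bar>c\<bar> * r else 0))"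
    unfolding nrm_def by (intro sum.cong) (auto simp: fps_X_def)
  also have "\<dots> \<le> \<bar>c\<bar> * r" using r by (simp add: sum.delta)
  finally show ?thesis .
qed

lemma nrm_mult:
  assumes r: "r \<ge> 0"
  shows "nrm P r (f * g) \<le> nrm P r f * nrm P r g"
proof -
  have "nrm P r (f * g) = (\<Sum>n\<le>P. \<bar>\<Sum>i\<le>n. fps_nth f i * fps_nth g (n - i)\<bar> * r ^ n)"
    unfolding nrm_def fps_mult_nth by (simp add: atLeast0AtMost)
  also have "\<dots> \<le> (\<Sum>n\<le>P. \<Sum>i\<le>n. (\<bar>fps_nth f i\<bar> * r ^ i) * (\<bar>fps_nth g (n - i)\<bar> * r ^ (n - i)))"
  proof (intro sum_mono)
    fix n assume "n \<in> {..P}"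
    have "\<bar>\<Sum>i\<le>n. fps_nth f i * fps_nth g (n - i)\<bar> * r ^ n \<le> (\<Sum>i\<le>n. \<bar>fps_nth f i * fps_nth g (n - i)\<bar>) * r ^ n"
      using r by (intro mult_right_mono sum_abs) auto
    also have "\<dots> = (\<Sum>i\<le>n. (\<bar>fps_nth f i\<bar> * r ^ i) * (\<bar>fps_nth g (n - i)\<bar> * r ^ (n - i)))"
      unfolding sum_distrib_right
    proof (rule sum.cong[OF refl])
      fix i assume "i \<in> {..n}"
      then have "r ^ n = r ^ i * r ^ (n - i)" by (simp add: power_add[symmetric])
      then show "\<bar>fps_nth f i * fps_nth g (n - i)\<bar> * r ^ n = \<bar>fps_nth f i\<bar> * r ^ i * (\<bar>fps_nth g (n - i)\<bar> * r ^ (n - i))"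
        by (simp add: abs_mult)
    qed
    finally show "\<bar>\<Sum>i\<le>n. fps_nth f i * fps_nth g (n - i)\<bar> * r ^ n \<le> (\<Sum>i\<le>n. (\<bar>fps_nth f i\<bar> * r ^ i) * (\<bar>fps_nth g (n - i)\<bar> * r ^ (n - i)))" .
  qed
  also have "\<dots> = (\<Sum>(i, j)\<in>{(i, j). i + j \<le> P}. (\<bar>fps_nth f i\<bar> * r ^ i) * (\<bar>fps_nth g j\<bar> * r ^ j))"
    by (rule sum.triangle_reindex_eq[symmetric])
  also have "\<dots> \<le> (\<Sum>(i, j)\<in>{..P} \<times> {..P}. (\<bar>fps_nth f i\<bar> * r ^ i) * (\<bar>fps_nth g j\<bar> * r ^ j))"
    using r by (intro sum_mono2) auto
  also have "\<dots> = nrm P r f * nrm P r g"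
    unfolding nrm_def sum_product sum.cartesian_product by simp
  finally show ?thesis .
qed

lemma nrm_prod_list:
  assumes r: "r \<ge> 0" and "\<And>b. b \<in> set bs \<Longrightarrow> nrm P r (F b) \<le> \<rho>"
  shows "nrm P r (prod_list (map F bs)) \<le> \<rho> ^ length bs"
  using assms(2)
proof (induction bs)
  case Nil then show ?case by (simp add: nrm_1)
next
  case (Cons b bs)
  have "0 \<le> \<rho>" using Cons.prems[of b] nrm_nonneg[OF r, of P "F b"] by simp
  have "nrm P r (prod_list (map F (b # bs))) \<le> nrm P r (F b) * nrm P r (prod_list (map F bs))"
    using nrm_mult[OF r] by simp
  also have "nrm P r (F b) * nrm P r (prod_list (map F bs)) \<le> \<rho> * \<rho> ^ length bs"
    using Cons nrm_nonneg[OF r] \<open>0 \<le> \<rho>\<close> by (intro mult_mono) auto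
  finally show ?case by simp
qed


lemma eval_cmult:
  assumes "ereal (norm s) < fps_conv_radius f"
  shows "ereal (norm s) < fps_conv_radius (fps_const c * (f :: real fps))"
    "eval_fps (fps_const c * f) s = c * eval_fps f s"
proof -
  have "fps_conv_radius (fps_const c * f) \<ge> min (fps_conv_radius (fps_const c)) (fps_conv_radius f)"
    by (rule fps_conv_radius_mult)
  then show "ereal (norm s) < fps_conv_radius (fps_const c * f)" using assms by simp
  show "eval_fps (fps_const c * f) s = c * eval_fps f s"
    using assms by (subst eval_fps_mult) auto
qed

lemma eval_sum:
  assumes "finite I" "\<And>i. i \<in> I \<Longrightarrow> ereal (norm s) < fps_conv_radius (f i :: real fps)"
  shows "ereal (norm s) < fps_conv_radius (sum f I) \<and> eval_fps (sum f I) s = (\<Sum>i\<in>I. eval_fps (f i) s)"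
  using assms
proof (induction I rule: finite_induct)
  case empty then show ?case by simp
next
  case (insert x F)
  then have a: "ereal (norm s) < fps_conv_radius (f x)" "ereal (norm s) < fps_conv_radius (sum f F)"
    "eval_fps (sum f F) s = (\<Sum>i\<in>F. eval_fps (f i) s)" by auto
  have mm: "fps_conv_radius (f x + sum f F) \<ge> min (fps_conv_radius (f x)) (fps_conv_radius (sum f F))"
    by (rule fps_conv_radius_add)
  have "ereal (norm s) < min (fps_conv_radius (f x)) (fps_conv_radius (sum f F))" using a(1,2) by simp
  then have "ereal (norm s) < fps_conv_radius (f x + sum f F)"
    using mm by (rule less_le_trans)
  then show ?case using a insert.hyps by (simp add: eval_fps_add)
qed

lemma eval_prod_list:
  assumes "\<And>b. b \<in> set bs \<Longrightarrow> ereal (norm s) < fps_conv_radius (F b :: real fps)"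
  shows "ereal (norm s) < fps_conv_radius (prod_list (map F bs)) \<and>
         eval_fps (prod_list (map F bs)) s = prod_list (map (\<lambda>b. eval_fps (F b) s) bs)"
  using assms
proof (induction bs)
  case Nil then show ?case by simp
next
  case (Cons b bs)
  then have a: "ereal (norm s) < fps_conv_radius (F b)" "ereal (norm s) < fps_conv_radius (prod_list (map F bs))"
    "eval_fps (prod_list (map F bs)) s = prod_list (map (\<lambda>b. eval_fps (F b) s) bs)" by auto
  have mm: "fps_conv_radius (F b * prod_list (map F bs)) \<ge> min (fps_conv_radius (F b)) (fps_conv_radius (prod_list (map F bs)))"
    by (rule fps_conv_radius_mult)
  have "ereal (norm s) < min (fps_conv_radius (F b)) (fps_conv_radius (prod_list (map F bs)))" using a(1,2) by simp
  then have "ereal (norm s) < fps_conv_radius (F b * prod_list (map F bs))"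
    using mm by (rule less_le_trans)
  then show ?case using a by (simp add: eval_fps_mult)
qed

locale FP =
  fixes B :: "'b set" and N :: nat and \<gamma> :: "'b \<Rightarrow> real" and T :: "nat \<Rightarrow> 'b list \<Rightarrow> 'b \<Rightarrow> real"
  assumes finB: "finite B"
begin

definition Psi :: "('b \<Rightarrow> real fps) \<Rightarrow> 'b \<Rightarrow> real fps" where
  "Psi F b = fps_const (\<gamma> b) * fps_X -
     (\<Sum>k\<in>{2..<N}. \<Sum>bs\<in>lsts B k. fps_const (T k bs b) * prod_list (map F bs))"

lemma lsts_set: "bs \<in> lsts B k \<Longrightarrow> set bs \<subseteq> B" "bs \<in> lsts B k \<Longrightarrow> length bs = k"
  unfolding lsts_def by auto

lemma Psi_X2:
  assumes "\<And>b. b \<in> B \<Longrightarrow> fps_X dvd F b"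
  shows "fps_X ^ 2 dvd (\<Sum>k\<in>{2..<N}. \<Sum>bs\<in>lsts B k. fps_const (T k bs b) * prod_list (map F bs))"
proof (intro dvd_sum)
  fix k bs assume k: "k \<in> {2..<N}" and bs: "bs \<in> lsts B k"
  have "fps_X ^ k dvd prod_list (map F bs)"
    using dvd_prod_list[of bs F] assms lsts_set[OF bs] by auto
  moreover have "(fps_X :: real fps) ^ 2 dvd fps_X ^ k" using k by (intro le_imp_power_dvd) auto
  ultimately show "fps_X ^ 2 dvd fps_const (T k bs b) * prod_list (map F bs)"
    by (meson dvd_trans dvd_mult)
qed

lemma Psi_X:
  assumes "\<And>b. b \<in> B \<Longrightarrow> fps_X dvd F b"
  shows "fps_X dvd Psi F b"
proof -
  have d: "fps_X dvd (fps_X :: real fps) ^ 2" by (simp add: power2_eq_square)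
  have "fps_X dvd (\<Sum>k\<in>{2..<N}. \<Sum>bs\<in>lsts B k. fps_const (T k bs b) * prod_list (map F bs))"
    by (rule dvd_trans[OF d Psi_X2[OF assms]])
  moreover have "fps_X dvd fps_const (\<gamma> b) * fps_X" by (rule dvd_mult) (rule dvd_refl)
  ultimately show ?thesis unfolding Psi_def by (intro dvd_diff)
qed

lemma Psi_diff:
  assumes "\<And>b. b \<in> B \<Longrightarrow> fps_X dvd F b" "\<And>b. b \<in> B \<Longrightarrow> fps_X dvd G b"
    "\<And>b. b \<in> B \<Longrightarrow> fps_X ^ p dvd (F b - G b)"
  shows "fps_X ^ Suc p dvd (Psi F b - Psi G b)"
proof -
  have e: "Psi F b - Psi G b = (\<Sum>k\<in>{2..<N}. \<Sum>bs\<in>lsts B k.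
      fps_const (T k bs b) * (prod_list (map G bs) - prod_list (map F bs)))"
    unfolding Psi_def by (simp add: right_diff_distrib sum_subtractf)
  show ?thesis unfolding e
  proof (intro dvd_sum)
    fix k bs assume k: "k \<in> {2..<N}" and bs: "bs \<in> lsts B k"
    have "bs \<noteq> []" using k lsts_set(2)[OF bs] by auto
    then have "fps_X ^ (p + length bs - 1) dvd (prod_list (map G bs) - prod_list (map F bs))"
      using assms lsts_set(1)[OF bs] by (intro dvd_prod_list_diff) (auto simp: dvd_diff_commute)
    moreover have "(fps_X :: real fps) ^ Suc p dvd fps_X ^ (p + length bs - 1)"
      using k lsts_set(2)[OF bs] by (intro le_imp_power_dvd) auto
    ultimately show "fps_X ^ Suc p dvd fps_const (T k bs b) * (prod_list (map G bs) - prod_list (map F bs))"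
      by (meson dvd_trans dvd_mult)
  qed
qed

primrec Fi :: "nat \<Rightarrow> 'b \<Rightarrow> real fps" where
  "Fi 0 = (\<lambda>b. 0)"
| "Fi (Suc p) = Psi (Fi p)"

lemma Fi_X: "b \<in> B \<Longrightarrow> fps_X dvd Fi p b"
proof (induction p arbitrary: b)
  case 0 then show ?case by simp
next
  case (Suc p) then show ?case by (simp add: Psi_X)
qed

lemma Fi_step: "b \<in> B \<Longrightarrow> fps_X ^ p dvd (Fi (Suc p) b - Fi p b)"
proof (induction p arbitrary: b)
  case 0 then show ?case by simp
next
  case (Suc p)
  have e: "Fi (Suc (Suc p)) b - Fi (Suc p) b = Psi (Fi (Suc p)) b - Psi (Fi p) b" by simp
  have "fps_X ^ Suc p dvd (Psi (Fi (Suc p)) b - Psi (Fi p) b)"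
    by (rule Psi_diff) (use Fi_X Suc.IH in \<open>auto simp del: Fi.simps\<close>)
  then show ?case unfolding e .
qed

lemma Fi_mono: "p \<le> q \<Longrightarrow> b \<in> B \<Longrightarrow> fps_X ^ p dvd (Fi q b - Fi p b)"
proof (induction q rule: dec_induct)
  case base then show ?case by simp
next
  case (step q)
  have "(fps_X :: real fps) ^ p dvd fps_X ^ q" using step by (intro le_imp_power_dvd)
  then have "fps_X ^ p dvd (Fi (Suc q) b - Fi q b)" using Fi_step[OF step.prems] dvd_trans by blast
  then have "fps_X ^ p dvd ((Fi (Suc q) b - Fi q b) + (Fi q b - Fi p b))"
    using step by (intro dvd_add) auto
  then show ?case by simp
qed

definition A :: "'b \<Rightarrow> real fps" where
  "A b = Abs_fps (\<lambda>n. fps_nth (Fi (Suc n) b) n)"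

lemma A_nth: "b \<in> B \<Longrightarrow> n \<le> P \<Longrightarrow> fps_nth (A b) n = fps_nth (Fi (Suc P) b) n"
proof -
  assume b: "b \<in> B" and n: "n \<le> P"
  have "fps_X ^ Suc n dvd (Fi (Suc P) b - Fi (Suc n) b)" using Fi_mono[of "Suc n" "Suc P" b] b n by simp
  then have "fps_nth (Fi (Suc P) b - Fi (Suc n) b) n = 0" by (rule Xpow_dvd_nth) simp
  then show ?thesis by (simp add: A_def)
qed

lemma A_dvd: "b \<in> B \<Longrightarrow> fps_X ^ Suc P dvd (A b - Fi (Suc P) b)"
proof -
  assume b: "b \<in> B"
  show ?thesis
  proof (rule nth_Xpow_dvd)
    fix i assume "i < Suc P"
    then show "fps_nth (A b - Fi (Suc P) b) i = 0" using A_nth[OF b, of i P] by (simp del: Fi.simps)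
  qed
qed

lemma A_X: "b \<in> B \<Longrightarrow> fps_X dvd A b"
proof -
  assume b: "b \<in> B"
  have "fps_nth (Fi (Suc 0) b) 0 = 0" using Xpow_dvd_nth[of 1 "Fi (Suc 0) b" 0] Fi_X[OF b, of "Suc 0"] by (simp del: Fi.simps)
  then have "fps_X ^ 1 dvd A b" using A_nth[OF b, of 0 0] by (intro nth_Xpow_dvd) (simp del: Fi.simps)
  then show ?thesis by simp
qed

lemma A_fix: "b \<in> B \<Longrightarrow> Psi A b = A b"
proof (rule fps_ext)
  fix n assume b: "b \<in> B"
  have "fps_X ^ Suc (Suc n) dvd (Psi A b - Psi (Fi (Suc n)) b)"
    by (rule Psi_diff[of A "Fi (Suc n)"]) (use A_X Fi_X A_dvd in \<open>auto simp del: Fi.simps\<close>)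
  then have "fps_nth (Psi A b - Psi (Fi (Suc n)) b) n = 0" by (rule Xpow_dvd_nth) simp
  then have "fps_nth (Psi A b) n = fps_nth (Fi (Suc (Suc n)) b) n" by simp
  also have "\<dots> = fps_nth (A b) n" using A_nth[OF b, of n "Suc n"] by simp
  finally show "fps_nth (Psi A b) n = fps_nth (A b) n" .
qed

lemma A_0: "b \<in> B \<Longrightarrow> fps_nth (A b) 0 = 0"
  using Xpow_dvd_nth[of 1 "A b" 0] A_X by simp

lemma A_1: "b \<in> B \<Longrightarrow> fps_nth (A b) (1::nat) = \<gamma> b"
proof -
  assume b: "b \<in> B"
  have "fps_nth (\<Sum>k\<in>{2..<N}. \<Sum>bs\<in>lsts B k. fps_const (T k bs b) * prod_list (map A bs)) 1 = 0"
  proof -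
    have "fps_X ^ 2 dvd (\<Sum>k\<in>{2..<N}. \<Sum>bs\<in>lsts B k. fps_const (T k bs b) * prod_list (map A bs))"
      using Psi_X2[of A b] A_X by blast
    from Xpow_dvd_nth[OF this, of 1] show ?thesis by simp
  qed
  then have "fps_nth (Psi A b) 1 = \<gamma> b" unfolding Psi_def by (simp add: fps_X_def)
  then show ?thesis using A_fix[OF b] by simp
qed

definition K :: real where
  "K = (\<Sum>b\<in>B. \<Sum>k\<in>{2..<N}. \<Sum>bs\<in>lsts B k. \<bar>T k bs b\<bar>)"
definition G :: real where
  "G = (\<Sum>b\<in>B. \<bar>\<gamma> b\<bar>)"

lemma K_nonneg: "K \<ge> 0" unfolding K_def by (intro sum_nonneg) auto
lemma G_nonneg: "G \<ge> 0" unfolding G_def by (intro sum_nonneg) auto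

lemma Psi_nrm:
  assumes r: "r \<ge> 0" and rho: "0 \<le> \<rho>" "\<rho> \<le> 1" and b: "b \<in> B"
    and F: "\<And>b. b \<in> B \<Longrightarrow> nrm P r (F b) \<le> \<rho>"
  shows "nrm P r (Psi F b) \<le> G * r + K * \<rho> ^ 2"
proof -
  have "nrm P r (Psi F b) \<le> nrm P r (fps_const (\<gamma> b) * fps_X) +
      nrm P r (\<Sum>k\<in>{2..<N}. \<Sum>bs\<in>lsts B k. fps_const (T k bs b) * prod_list (map F bs))"
    unfolding Psi_def by (rule nrm_diff[OF r])
  also have "\<dots> \<le> \<bar>\<gamma> b\<bar> * r + (\<Sum>k\<in>{2..<N}. \<Sum>bs\<in>lsts B k. \<bar>T k bs b\<bar> * \<rho> ^ 2)"
  proof (rule add_mono)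
    show "nrm P r (fps_const (\<gamma> b) * fps_X) \<le> \<bar>\<gamma> b\<bar> * r" by (rule nrm_X[OF r])
    have "nrm P r (\<Sum>k\<in>{2..<N}. \<Sum>bs\<in>lsts B k. fps_const (T k bs b) * prod_list (map F bs))
        \<le> (\<Sum>k\<in>{2..<N}. nrm P r (\<Sum>bs\<in>lsts B k. fps_const (T k bs b) * prod_list (map F bs)))"
      by (rule nrm_sum[OF r])
    also have "\<dots> \<le> (\<Sum>k\<in>{2..<N}. \<Sum>bs\<in>lsts B k. nrm P r (fps_const (T k bs b) * prod_list (map F bs)))"
      by (intro sum_mono nrm_sum[OF r])
    also have "\<dots> \<le> (\<Sum>k\<in>{2..<N}. \<Sum>bs\<in>lsts B k. \<bar>T k bs b\<bar> * \<rho> ^ 2)"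
    proof (intro sum_mono)
      fix k bs assume k: "k \<in> {2..<N}" and bs: "bs \<in> lsts B k"
      have "nrm P r (prod_list (map F bs)) \<le> \<rho> ^ length bs"
        using lsts_set(1)[OF bs] F by (intro nrm_prod_list[OF r]) auto
      also have "\<dots> \<le> \<rho> ^ 2" using k lsts_set(2)[OF bs] rho by (intro power_decreasing) auto
      finally show "nrm P r (fps_const (T k bs b) * prod_list (map F bs)) \<le> \<bar>T k bs b\<bar> * \<rho> ^ 2"
        unfolding nrm_cmult by (intro mult_left_mono) auto
    qed
    finally show "nrm P r (\<Sum>k\<in>{2..<N}. \<Sum>bs\<in>lsts B k. fps_const (T k bs b) * prod_list (map F bs))
        \<le> (\<Sum>k\<in>{2..<N}. \<Sum>bs\<in>lsts B k. \<bar>T k bs b\<bar> * \<rho> ^ 2)" .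
  qed
  also have "\<dots> \<le> G * r + K * \<rho> ^ 2"
  proof (rule add_mono)
    show "\<bar>\<gamma> b\<bar> * r \<le> G * r" unfolding G_def using b r finB
      by (intro mult_right_mono member_le_sum) auto
    have "(\<Sum>k\<in>{2..<N}. \<Sum>bs\<in>lsts B k. \<bar>T k bs b\<bar> * \<rho> ^ 2) = (\<Sum>k\<in>{2..<N}. \<Sum>bs\<in>lsts B k. \<bar>T k bs b\<bar>) * \<rho> ^ 2"
      by (simp add: sum_distrib_right)
    also have "\<dots> \<le> K * \<rho> ^ 2" unfolding K_def using b finB
      by (intro mult_right_mono member_le_sum[of b B "\<lambda>b. \<Sum>k\<in>{2..<N}. \<Sum>bs\<in>lsts B k. \<bar>T k bs b\<bar>"])
         (auto intro!: sum_nonneg)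
    finally show "(\<Sum>k\<in>{2..<N}. \<Sum>bs\<in>lsts B k. \<bar>T k bs b\<bar> * \<rho> ^ 2) \<le> K * \<rho> ^ 2" .
  qed
  finally show ?thesis .
qed

lemma Fi_nrm:
  assumes r: "r \<ge> 0" and rho: "0 \<le> \<rho>" "\<rho> \<le> 1" and c: "G * r + K * \<rho> ^ 2 \<le> \<rho>"
  shows "b \<in> B \<Longrightarrow> nrm P r (Fi p b) \<le> \<rho>"
proof (induction p arbitrary: b)
  case 0 then show ?case using rho by (simp add: nrm_def)
next
  case (Suc p)
  show ?case using Psi_nrm[OF r rho Suc.prems, of P "Fi p"] Suc.IH c by simp
qed

lemma A_nrm:
  assumes r: "r \<ge> 0" and rho: "0 \<le> \<rho>" "\<rho> \<le> 1" and c: "G * r + K * \<rho> ^ 2 \<le> \<rho>" and b: "b \<in> B"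
  shows "nrm P r (A b) \<le> \<rho>"
proof -
  have "nrm P r (A b) = nrm P r (Fi (Suc P) b)"
    unfolding nrm_def by (intro sum.cong) (auto simp: A_nth[OF b])
  then show ?thesis using Fi_nrm[OF r rho c b, of P "Suc P"] by (simp del: Fi.simps)
qed

lemma A_summable:
  assumes r: "r \<ge> 0" and rho: "0 \<le> \<rho>" "\<rho> \<le> 1" and c: "G * r + K * \<rho> ^ 2 \<le> \<rho>" and b: "b \<in> B"
  shows "summable (\<lambda>n. \<bar>fps_nth (A b) n\<bar> * r ^ n)"
  by (rule bounded_imp_summable[of _ \<rho>]) (use r A_nrm[OF r rho c b] in \<open>auto simp: nrm_def\<close>)

lemma A_radius:
  assumes r: "r \<ge> 0" and rho: "0 \<le> \<rho>" "\<rho> \<le> 1" and c: "G * r + K * \<rho> ^ 2 \<le> \<rho>" and b: "b \<in> B"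
  shows "ereal r \<le> fps_conv_radius (A b)"
proof -
  have e: "(\<lambda>n. \<bar>fps_nth (A b) n * r ^ n\<bar>) = (\<lambda>n. \<bar>fps_nth (A b) n\<bar> * r ^ n)"
  proof
    fix n
    have "\<bar>r ^ n\<bar> = r ^ n" using r by simp
    then show "\<bar>fps_nth (A b) n * r ^ n\<bar> = \<bar>fps_nth (A b) n\<bar> * r ^ n" by (simp only: abs_mult)
  qed
  have "summable (\<lambda>n. fps_nth (A b) n * r ^ n)"
    by (rule summable_rabs_cancel) (unfold e, rule A_summable[OF assms])
  from conv_radius_geI[OF this] have "ereal (norm r) \<le> fps_conv_radius (A b)"
    unfolding fps_conv_radius_def .
  then show ?thesis using r by simp
qed

lemma A_eval_bound:
  assumes r: "r \<ge> 0" and rho: "0 \<le> \<rho>" "\<rho> \<le> 1" and c: "G * r + K * \<rho> ^ 2 \<le> \<rho>" and b: "b \<in> B"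
    and s: "\<bar>s\<bar> \<le> r"
  shows "\<bar>eval_fps (A b) s\<bar> \<le> \<rho>"
proof -
  let ?a = "\<lambda>n. \<bar>fps_nth (A b) n\<bar> * r ^ n"
  have sa: "summable ?a" by (rule A_summable[OF assms(1-5)])
  have le: "\<bar>fps_nth (A b) n * s ^ n\<bar> \<le> ?a n" for n
  proof -
    have "\<bar>s\<bar> ^ n \<le> r ^ n" using s by (intro power_mono) auto
    then show ?thesis by (simp add: abs_mult power_abs mult_left_mono)
  qed
  have sabs: "summable (\<lambda>n. \<bar>fps_nth (A b) n * s ^ n\<bar>)"
    by (rule summable_comparison_test'[OF sa]) (use le in simp)
  have "\<bar>eval_fps (A b) s\<bar> \<le> (\<Sum>n. \<bar>fps_nth (A b) n * s ^ n\<bar>)"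
    unfolding eval_fps_def by (rule summable_rabs[OF sabs])
  also have "\<dots> \<le> suminf ?a" by (rule suminf_le[OF le sabs sa])
  also have "\<dots> \<le> \<rho>"
  proof (rule suminf_le_const[OF sa])
    fix n
    show "sum ?a {..<n} \<le> \<rho>"
    proof (cases n)
      case 0 then show ?thesis using rho by simp
    next
      case (Suc m)
      have "sum ?a {..<n} = nrm m r (A b)" unfolding nrm_def Suc lessThan_Suc_atMost ..
      then show ?thesis using A_nrm[OF assms(1-5)] by simp
    qed
  qed
  finally show ?thesis .
qed

lemma Psi_eval:
  assumes F: "\<And>b. b \<in> B \<Longrightarrow> ereal (norm s) < fps_conv_radius (F b)"
  shows "eval_fps (Psi F b) s = \<gamma> b * s -
     (\<Sum>k\<in>{2..<N}. \<Sum>bs\<in>lsts B k. T k bs b * prod_list (map (\<lambda>b. eval_fps (F b) s) bs))"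
proof -
  have P: "ereal (norm s) < fps_conv_radius (prod_list (map F bs)) \<and>
         eval_fps (prod_list (map F bs)) s = prod_list (map (\<lambda>b. eval_fps (F b) s) bs)"
    if "bs \<in> lsts B k" for bs k
    using lsts_set(1)[OF that] F by (intro eval_prod_list) auto
  have C: "ereal (norm s) < fps_conv_radius (fps_const (T k bs b) * prod_list (map F bs)) \<and>
      eval_fps (fps_const (T k bs b) * prod_list (map F bs)) s = T k bs b * prod_list (map (\<lambda>b. eval_fps (F b) s) bs)"
    if "bs \<in> lsts B k" for bs k
    using eval_cmult[of s "prod_list (map F bs)" "T k bs b"] P[OF that] by simp
  have S1: "ereal (norm s) < fps_conv_radius (\<Sum>bs\<in>lsts B k. fps_const (T k bs b) * prod_list (map F bs)) \<and>
      eval_fps (\<Sum>bs\<in>lsts B k. fps_const (T k bs b) * prod_list (map F bs)) s =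
      (\<Sum>bs\<in>lsts B k. T k bs b * prod_list (map (\<lambda>b. eval_fps (F b) s) bs))" for k
    using eval_sum[of "lsts B k" s "\<lambda>bs. fps_const (T k bs b) * prod_list (map F bs)"] C
      finite_lsts[OF finB] by auto
  have S2: "ereal (norm s) < fps_conv_radius (\<Sum>k\<in>{2..<N}. \<Sum>bs\<in>lsts B k. fps_const (T k bs b) * prod_list (map F bs)) \<and>
      eval_fps (\<Sum>k\<in>{2..<N}. \<Sum>bs\<in>lsts B k. fps_const (T k bs b) * prod_list (map F bs)) s =
      (\<Sum>k\<in>{2..<N}. \<Sum>bs\<in>lsts B k. T k bs b * prod_list (map (\<lambda>b. eval_fps (F b) s) bs))"
    using eval_sum[of "{2..<N}" s "\<lambda>k. \<Sum>bs\<in>lsts B k. fps_const (T k bs b) * prod_list (map F bs)"] S1 by auto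
  have X: "eval_fps (fps_const (\<gamma> b) * fps_X) s = \<gamma> b * s"
    using eval_cmult[of s fps_X "\<gamma> b"] by simp
  have RX: "ereal (norm s) < fps_conv_radius (fps_const (\<gamma> b) * fps_X)"
    using eval_cmult[of s fps_X "\<gamma> b"] by simp
  show ?thesis unfolding Psi_def using S2 X RX by (simp add: eval_fps_diff)
qed

end

lemma abs_prod_list_le:
  assumes "\<And>b. b \<in> set bs \<Longrightarrow> \<bar>x b\<bar> \<le> (\<rho>::real)" "0 \<le> \<rho>"
  shows "\<bar>prod_list (map x bs)\<bar> \<le> \<rho> ^ length bs"
  using assms(1)
proof (induction bs)
  case Nil then show ?case by simp
next
  case (Cons b bs)
  have "\<bar>prod_list (map x (b # bs))\<bar> = \<bar>x b\<bar> * \<bar>prod_list (map x bs)\<bar>" by (simp add: abs_mult)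
  also have "\<dots> \<le> \<rho> * \<rho> ^ length bs"
    using Cons assms(2) by (intro mult_mono) auto
  finally show ?case by simp
qed

locale MAIN = LA Vd l N for Vd :: "int \<Rightarrow> 'v::real_normed_vector set" and l and N +
  fixes h1 h2 :: "'v \<Rightarrow> 'v" and u1 :: 'v
  assumes findim: "\<forall>d. \<exists>B. finite B \<and> Vd d = span B"
    and h1: "linear h1" "h1 ` Vd 1 \<subseteq> Vd 0"
    and h2: "linear h2" "h2 ` Vd 2 \<subseteq> Vd 1"
    and homotopy: "\<forall>x\<in>Vd 1. l 1 [h1 x] + h2 (l 1 [x]) = x"
    and u1: "u1 \<in> Vd 0" "l 1 [u1] = 0"
begin

definition Rf :: "'v \<Rightarrow> 'v" where
  "Rf u = (\<Sum>k\<in>{2..<N}. (1 / fact k) *\<^sub>R l k (replicate k u))"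

lemma sub: "x \<in> Vd d \<Longrightarrow> y \<in> Vd d \<Longrightarrow> x + y \<in> Vd d" "x \<in> Vd d \<Longrightarrow> c *\<^sub>R x \<in> Vd d"
  "x \<in> Vd d \<Longrightarrow> y \<in> Vd d \<Longrightarrow> x - y \<in> Vd d" "x \<in> Vd d \<Longrightarrow> - x \<in> Vd d" "0 \<in> Vd d"
  using subsp[of d] by (auto simp: subspace_def) (metis subsp subspace_diff, metis subsp subspace_neg)

lemma sub_sum: "(\<And>i. i \<in> I \<Longrightarrow> f i \<in> Vd d) \<Longrightarrow> sum f I \<in> Vd d"
  using subspace_sum[OF subsp] by blast

lemma rep_in: "u \<in> Vd 0 \<Longrightarrow> set (replicate k u) \<subseteq> Vd 0" by auto

lemma Rf_in: "u \<in> Vd 0 \<Longrightarrow> Rf u \<in> Vd 1"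
  unfolding Rf_def using deg0[of "replicate _ u"] by (intro sub_sum sub(2)) auto

lemma MC_split: "u \<in> Vd 0 \<Longrightarrow> MC l u = l 1 [u] + Rf u"
proof -
  assume u: "u \<in> Vd 0"
  let ?f = "\<lambda>k. (1 / fact k) *\<^sub>R l k (replicate k u)"
  show ?thesis
  proof (cases "N \<ge> 2")
    case True
    have e: "{..<N} = insert 0 (insert 1 {2..<N})" using True by auto
    show ?thesis unfolding MC_fin Rf_def e by (simp add: l0)
  next
    case False
    have "sum ?f {..<N} = 0"
    proof (rule sum.neutral, intro ballI)
      fix k assume "k \<in> {..<N}"
      then have "k = 0 \<or> (k = 1 \<and> N = 2) \<or> k \<ge> N" using False by auto
      then show "?f k = 0" using False by (auto simp: l0 l_high)
    qed
    moreover have "l 1 [u] = 0" using False l_high[of 1] by simp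
    moreover have "{2..<N} = {}" using False by auto
    ultimately show ?thesis unfolding MC_fin Rf_def by simp
  qed
qed

lemma l1_diff: "l 1 [a - b] = l 1 [a] - l 1 [b]"
  using linear_diff[OF lin1, of a b] by simp
lemma l1_add: "l 1 [a + b] = l 1 [a] + l 1 [b]"
  using linear_add[OF lin1, of a b] by simp
lemma l1_scale: "l 1 [c *\<^sub>R a] = c *\<^sub>R l 1 [a]"
  using linear_scale[OF lin1, of c a] by simp

lemma l11: "u \<in> Vd 0 \<Longrightarrow> l 1 [l 1 [u]] = 0"
  using jac_rep[of u 1] by simp

lemma MC_eqs:
  assumes u: "u \<in> Vd 0" and fx: "u = s *\<^sub>R u1 - h1 (Rf u)"
  shows "MC l u = h2 (l 1 [MC l u])"
proof -
  have R: "Rf u \<in> Vd 1" by (rule Rf_in[OF u])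
  have "l 1 [u] = l 1 [s *\<^sub>R u1 - h1 (Rf u)]"
    by (rule arg_cong[where f="\<lambda>z. l 1 [z]", OF fx])
  also have "\<dots> = s *\<^sub>R l 1 [u1] - l 1 [h1 (Rf u)]"
    by (simp only: l1_diff l1_scale)
  also have "\<dots> = - l 1 [h1 (Rf u)]" using u1 by simp
  finally have a: "l 1 [u] = - l 1 [h1 (Rf u)]" .
  have "MC l u = h2 (l 1 [Rf u])"
    using MC_split[OF u] a homotopy R by (metis add_diff_cancel_left' diff_minus_eq_add uminus_add_conv_diff)
  moreover have "l 1 [MC l u] = l 1 [Rf u]"
    using MC_split[OF u] l11[OF u] by (simp only: l1_add) simp
  ultimately show ?thesis by simp
qed

lemma MC_in: "u \<in> Vd 0 \<Longrightarrow> MC l u \<in> Vd 1"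
proof -
  assume u: "u \<in> Vd 0"
  have "l k (replicate k u) \<in> Vd 1" for k using deg0[OF rep_in[OF u, of k]] by simp
  then show ?thesis unfolding MC_fin by (intro sub_sum sub(2))
qed

lemma l1_MC:
  assumes u: "u \<in> Vd 0"
  shows "l 1 [MC l u] = - (\<Sum>j\<in>{1..<N}. (1 / fact j) *\<^sub>R l (Suc j) (MC l u # replicate j u))"
proof (cases "N = 0")
  case True then show ?thesis using l_high[of 1] by simp
next
  case False
  have e: "{..<N} = insert 0 {1..<N}" using False by auto
  have "(\<Sum>j<N. (1 / fact j) *\<^sub>R l (Suc j) (MC l u # replicate j u)) = 0" by (rule bianchi[OF u])
  then show ?thesis unfolding e by (simp add: eq_neg_iff_add_eq_0)
qed

definition W :: "'v set \<Rightarrow> nat \<Rightarrow> 'v list \<Rightarrow> 'v \<Rightarrow> 'v \<Rightarrow> real" where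
  "W C j bs c c' = real_vector.representation C (h2 (l (Suc j) (c # bs))) c'"

definition Mc :: "'v set \<Rightarrow> 'v set \<Rightarrow> real" where
  "Mc B C = (\<Sum>c'\<in>C. \<Sum>j\<in>{1..<N}. \<Sum>bs\<in>lsts B j. \<Sum>c\<in>C. \<bar>W C j bs c c'\<bar> / fact j)"

lemma small_zero:
  assumes B: "finite B" "B \<subseteq> Vd 0" and C: "finite C" "independent C" "span C = Vd 1"
    and x: "\<And>b. b \<in> B \<Longrightarrow> \<bar>x b\<bar> \<le> \<rho>" and rho: "0 \<le> \<rho>" "\<rho> \<le> 1" "\<rho> * Mc B C \<le> 1/2"
    and u: "u = (\<Sum>b\<in>B. x b *\<^sub>R b)" and y: "y \<in> Vd 1"
    and eq: "y = - (\<Sum>j\<in>{1..<N}. (1 / fact j) *\<^sub>R h2 (l (Suc j) (y # replicate j u)))"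
  shows "y = 0"
proof -
  let ?rep = "real_vector.representation C"
  let ?J = "{1..<N}"
  define E where "E j bs c = h2 (l (Suc j) (c # bs))" for j bs c
  define coef where "coef j bs c = (1 / fact j) * prod_list (map x bs) * ?rep y c" for j bs c
  have CV: "C \<subseteq> Vd 1" using C(3) span_superset by blast
  have Ein: "E j bs c \<in> Vd 1" if "bs \<in> lsts B j" "c \<in> C" for j bs c
  proof -
    have "set bs \<subseteq> Vd 0" "length bs = j" using that B unfolding lsts_def by auto
    then have "l (Suc j) (c # bs) \<in> Vd 2" using deg1[of c bs] CV that by auto
    then show ?thesis unfolding E_def using h2 by auto
  qed
  have yC: "y = (\<Sum>c\<in>C. ?rep y c *\<^sub>R c)"
    using real_vector.sum_representation_eq[OF C(2) _ C(1) subset_refl] y C(3) by simp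
  have ex: "h2 (l (Suc j) (y # bs)) = (\<Sum>c\<in>C. ?rep y c *\<^sub>R E j bs c)" if bs: "bs \<in> lsts B j" for j bs
  proof -
    have lj: "length bs = j" using bs unfolding lsts_def by auto
    have lin: "linear (\<lambda>z. l (Suc j) (z # bs))" using lin_head[of bs] lj by simp
    have "l (Suc j) (y # bs) = l (Suc j) ((\<Sum>c\<in>C. ?rep y c *\<^sub>R c) # bs)"
      by (rule arg_cong[where f="\<lambda>z. l (Suc j) (z # bs)", OF yC])
    also have "\<dots> = (\<Sum>c\<in>C. ?rep y c *\<^sub>R l (Suc j) (c # bs))"
      using linear_sum[OF lin, of "\<lambda>c. ?rep y c *\<^sub>R c" C] linear_scale[OF lin] by simp
    finally show ?thesis unfolding E_def by (simp add: linear_sum[OF h2(1)] linear_scale[OF h2(1)])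
  qed
  have ex2: "(1 / fact j) *\<^sub>R h2 (l (Suc j) (y # replicate j u)) =
      (\<Sum>bs\<in>lsts B j. \<Sum>c\<in>C. coef j bs c *\<^sub>R E j bs c)" for j
  proof -
    have "l (Suc j) (y # replicate j u) = (\<Sum>bs\<in>lsts B j. prod_list (map x bs) *\<^sub>R l (Suc j) (y # bs))"
      unfolding u lsts_def by (rule expand1[OF B(1)])
    then have "h2 (l (Suc j) (y # replicate j u)) = (\<Sum>bs\<in>lsts B j. prod_list (map x bs) *\<^sub>R h2 (l (Suc j) (y # bs)))"
      by (simp add: linear_sum[OF h2(1)] linear_scale[OF h2(1)])
    also have "\<dots> = (\<Sum>bs\<in>lsts B j. prod_list (map x bs) *\<^sub>R (\<Sum>c\<in>C. ?rep y c *\<^sub>R E j bs c))"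
      by (intro sum.cong refl) (simp add: ex)
    finally show ?thesis
      by (simp add: coef_def scaleR_sum_right)
  qed
  have main: "y = - (\<Sum>j\<in>?J. \<Sum>bs\<in>lsts B j. \<Sum>c\<in>C. coef j bs c *\<^sub>R E j bs c)"
    using eq ex2 by simp
  have inner: "(\<Sum>c\<in>C. coef j bs c *\<^sub>R E j bs c) \<in> Vd 1" if "bs \<in> lsts B j" for j bs
    using Ein[OF that] by (intro sub_sum sub(2))
  have mid: "(\<Sum>bs\<in>lsts B j. \<Sum>c\<in>C. coef j bs c *\<^sub>R E j bs c) \<in> Vd 1" for j
    by (rule sub_sum) (rule inner)
  have outer: "(\<Sum>j\<in>?J. \<Sum>bs\<in>lsts B j. \<Sum>c\<in>C. coef j bs c *\<^sub>R E j bs c) \<in> Vd 1"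
    by (rule sub_sum) (rule mid)
  have repy: "?rep y c' = - (\<Sum>j\<in>?J. \<Sum>bs\<in>lsts B j. \<Sum>c\<in>C. coef j bs c * ?rep (E j bs c) c')" for c'
  proof -
    have "?rep y c' = ?rep (- (\<Sum>j\<in>?J. \<Sum>bs\<in>lsts B j. \<Sum>c\<in>C. coef j bs c *\<^sub>R E j bs c)) c'"
      using main by (rule arg_cong[where f="\<lambda>z. ?rep z c'"])
    also have "\<dots> = - ?rep (\<Sum>j\<in>?J. \<Sum>bs\<in>lsts B j. \<Sum>c\<in>C. coef j bs c *\<^sub>R E j bs c) c'"
      using real_vector.representation_neg[OF C(2)] outer C(3) by simp
    also have "\<dots> = - (\<Sum>j\<in>?J. ?rep (\<Sum>bs\<in>lsts B j. \<Sum>c\<in>C. coef j bs c *\<^sub>R E j bs c) c')"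
    proof -
      have "?rep (\<Sum>j\<in>?J. \<Sum>bs\<in>lsts B j. \<Sum>c\<in>C. coef j bs c *\<^sub>R E j bs c) =
          (\<lambda>b. \<Sum>j\<in>?J. ?rep (\<Sum>bs\<in>lsts B j. \<Sum>c\<in>C. coef j bs c *\<^sub>R E j bs c) b)"
        by (rule real_vector.representation_sum[OF C(2)]) (use mid C(3) in auto)
      then show ?thesis by simp
    qed
    also have "\<dots> = - (\<Sum>j\<in>?J. \<Sum>bs\<in>lsts B j. ?rep (\<Sum>c\<in>C. coef j bs c *\<^sub>R E j bs c) c')"
    proof -
      have "?rep (\<Sum>bs\<in>lsts B j. \<Sum>c\<in>C. coef j bs c *\<^sub>R E j bs c) =
          (\<lambda>b. \<Sum>bs\<in>lsts B j. ?rep (\<Sum>c\<in>C. coef j bs c *\<^sub>R E j bs c) b)" for j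
        by (rule real_vector.representation_sum[OF C(2)]) (use inner C(3) in auto)
      then show ?thesis by simp
    qed
    also have "\<dots> = - (\<Sum>j\<in>?J. \<Sum>bs\<in>lsts B j. \<Sum>c\<in>C. ?rep (coef j bs c *\<^sub>R E j bs c) c')"
    proof -
      have "?rep (\<Sum>c\<in>C. coef j bs c *\<^sub>R E j bs c) c' = (\<Sum>c\<in>C. ?rep (coef j bs c *\<^sub>R E j bs c) c')"
        if "bs \<in> lsts B j" for j bs
      proof -
        have "?rep (\<Sum>c\<in>C. coef j bs c *\<^sub>R E j bs c) = (\<lambda>b. \<Sum>c\<in>C. ?rep (coef j bs c *\<^sub>R E j bs c) b)"
          by (rule real_vector.representation_sum[OF C(2)]) (use Ein[OF that] sub(2) C(3) in auto)
        then show ?thesis by simp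
      qed
      then show ?thesis by (intro arg_cong[where f=uminus] sum.cong refl) auto
    qed
    also have "\<dots> = - (\<Sum>j\<in>?J. \<Sum>bs\<in>lsts B j. \<Sum>c\<in>C. coef j bs c * ?rep (E j bs c) c')"
    proof -
      have "?rep (coef j bs c *\<^sub>R E j bs c) c' = coef j bs c * ?rep (E j bs c) c'"
        if "bs \<in> lsts B j" "c \<in> C" for j bs c
        using real_vector.representation_scale[OF C(2)] Ein[OF that] C(3) by simp
      then show ?thesis by (intro arg_cong[where f=uminus] sum.cong refl) auto
    qed
    finally show ?thesis .
  qed
  define \<nu> where "\<nu> = (\<Sum>c\<in>C. \<bar>?rep y c\<bar>)"
  have nu0: "\<nu> \<ge> 0" unfolding \<nu>_def by (intro sum_nonneg) auto
  have repc: "\<bar>?rep y c\<bar> \<le> \<nu>" if "c \<in> C" for c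
    unfolding \<nu>_def using that C(1) by (intro member_le_sum) auto
  have trm: "\<bar>coef j bs c * ?rep (E j bs c) c'\<bar> \<le> (\<rho> * \<nu>) * (\<bar>W C j bs c c'\<bar> / fact j)"
    if j: "j \<in> ?J" and bs: "bs \<in> lsts B j" and c: "c \<in> C" for j bs c c'
  proof -
    have "\<bar>prod_list (map x bs)\<bar> \<le> \<rho> ^ length bs"
      using bs x rho(1) unfolding lsts_def by (intro abs_prod_list_le) auto
    also have "\<dots> \<le> \<rho>" using power_decreasing[of 1 "length bs" \<rho>] bs j rho unfolding lsts_def by auto
    finally have px: "\<bar>prod_list (map x bs)\<bar> \<le> \<rho>" .
    have "\<bar>coef j bs c * ?rep (E j bs c) c'\<bar> = \<bar>prod_list (map x bs)\<bar> * \<bar>?rep y c\<bar> * (\<bar>W C j bs c c'\<bar> / fact j)"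
      unfolding coef_def W_def E_def by (simp add: abs_mult)
    also have "\<dots> \<le> \<rho> * \<nu> * (\<bar>W C j bs c c'\<bar> / fact j)"
      using px repc[OF c] rho nu0 by (intro mult_right_mono mult_mono) auto
    finally show ?thesis .
  qed
  have "(\<Sum>c\<in>C. \<bar>?rep y c\<bar>) \<le> (\<Sum>c'\<in>C. \<Sum>j\<in>?J. \<Sum>bs\<in>lsts B j. \<Sum>c\<in>C. (\<rho> * \<nu>) * (\<bar>W C j bs c c'\<bar> / fact j))"
  proof (rule sum_mono)
    fix c' assume "c' \<in> C"
    have "\<bar>?rep y c'\<bar> = \<bar>\<Sum>j\<in>?J. \<Sum>bs\<in>lsts B j. \<Sum>c\<in>C. coef j bs c * ?rep (E j bs c) c'\<bar>"
      using repy[of c'] by simp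
    also have "\<dots> \<le> (\<Sum>j\<in>?J. \<Sum>bs\<in>lsts B j. \<Sum>c\<in>C. \<bar>coef j bs c * ?rep (E j bs c) c'\<bar>)"
      by (rule order_trans[OF sum_abs sum_mono], rule order_trans[OF sum_abs sum_mono], rule sum_abs)
    also have "\<dots> \<le> (\<Sum>j\<in>?J. \<Sum>bs\<in>lsts B j. \<Sum>c\<in>C. (\<rho> * \<nu>) * (\<bar>W C j bs c c'\<bar> / fact j))"
      using trm by (intro sum_mono) auto
    finally show "\<bar>?rep y c'\<bar> \<le> (\<Sum>j\<in>?J. \<Sum>bs\<in>lsts B j. \<Sum>c\<in>C. (\<rho> * \<nu>) * (\<bar>W C j bs c c'\<bar> / fact j))" .
  qed
  then have "\<nu> \<le> (\<Sum>c'\<in>C. \<Sum>j\<in>?J. \<Sum>bs\<in>lsts B j. \<Sum>c\<in>C. (\<rho> * \<nu>) * (\<bar>W C j bs c c'\<bar> / fact j))"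
    unfolding \<nu>_def[symmetric] .
  also have "\<dots> = (\<rho> * \<nu>) * Mc B C"
    unfolding Mc_def by (simp add: sum_distrib_left)
  also have "\<dots> = \<nu> * (\<rho> * Mc B C)" by simp
  also have "\<dots> \<le> \<nu> * (1/2)" using rho(3) nu0 by (intro mult_left_mono) auto
  finally have "\<nu> \<le> 0" by simp
  then have "\<forall>c\<in>C. ?rep y c = 0"
    using repc by (meson abs_le_zero_iff order_trans)
  then show "y = 0" using yC by simp
qed

end

context MAIN begin

lemma local_curve:
  "\<exists>B A r. finite B \<and> B \<subseteq> Vd 0 \<and> r > 0 \<and>
     (\<forall>b\<in>B. ereal r \<le> fps_conv_radius (A b) \<and> fps_nth (A b) 0 = 0) \<and>
     (\<Sum>b\<in>B. fps_nth (A b) 1 *\<^sub>R b) = u1 \<and>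
     (\<forall>s. \<bar>s\<bar> < r \<longrightarrow> MC l (\<Sum>b\<in>B. eval_fps (A b) s *\<^sub>R b) = 0)"
proof -
  obtain B where B: "finite B" "Vd 0 = span B" using findim by blast
  have BV: "B \<subseteq> Vd 0" using B(2) real_vector.span_superset by blast
  obtain B1 where B1: "finite B1" "Vd 1 = span B1" using findim by blast
  obtain C where C0: "C \<subseteq> Vd 1" "independent C" "Vd 1 \<subseteq> span C"
    using real_vector.maximal_independent_subset[of "Vd 1"] by blast
  have spC: "span C = Vd 1"
    using C0 real_vector.span_minimal[OF C0(1) subsp] by blast
  have fC: "finite C"
    using real_vector.independent_span_bound[OF B1(1) C0(2)] C0(1) B1(2) by auto
  have spanB: "\<And>v. v \<in> Vd 0 \<Longrightarrow> \<exists>t. v = (\<Sum>b\<in>B. t b *\<^sub>R b)"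
    using B real_vector.span_finite[OF B(1)] by auto
  obtain \<gamma> where \<gamma>: "u1 = (\<Sum>b\<in>B. \<gamma> b *\<^sub>R b)" using spanB[OF u1(1)] by blast
  have "\<forall>k bs. \<exists>t. bs \<in> lsts B k \<longrightarrow> h1 (l k bs) = (\<Sum>b\<in>B. t b *\<^sub>R b)"
  proof (intro allI)
    fix k bs
    show "\<exists>t. bs \<in> lsts B k \<longrightarrow> h1 (l k bs) = (\<Sum>b\<in>B. t b *\<^sub>R b)"
    proof (cases "bs \<in> lsts B k")
      case True
      then have "set bs \<subseteq> Vd 0" "length bs = k" using BV unfolding lsts_def by auto
      then have "l k bs \<in> Vd 1" using deg0[of bs] by simp
      then have "h1 (l k bs) \<in> Vd 0" using h1 by auto
      then show ?thesis using spanB by blast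
    qed simp
  qed
  then obtain tt where tt: "\<And>k bs. bs \<in> lsts B k \<Longrightarrow> h1 (l k bs) = (\<Sum>b\<in>B. tt k bs b *\<^sub>R b)"
    unfolding choice_iff by blast
  define T where "T k bs b = tt k bs b / fact k" for k bs b
  interpret F: FP B N \<gamma> T by unfold_locales (rule B(1))
  define M where "M = Mc B C"
  have M0: "M \<ge> 0" unfolding M_def Mc_def by (intro sum_nonneg) auto
  define \<rho> where "\<rho> = 1 / (2 * F.K + 2 * M + 2)"
  define r where "r = \<rho> / (2 * F.G + 2)"
  have K0: "F.K \<ge> 0" by (rule F.K_nonneg)
  have G0: "F.G \<ge> 0" by (rule F.G_nonneg)
  have rho0: "\<rho> > 0" unfolding \<rho>_def using K0 M0 by simp
  have rho1: "\<rho> \<le> 1" unfolding \<rho>_def using K0 M0 by simp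
  have r0: "r > 0" unfolding r_def using rho0 G0 by simp
  have Kr: "F.K * \<rho> \<le> 1/2" unfolding \<rho>_def using K0 M0 by (simp add: field_simps)
  have Mr: "\<rho> * M \<le> 1/2" unfolding \<rho>_def using K0 M0 by (simp add: field_simps)
  have Gr: "F.G * r \<le> \<rho> / 2" unfolding r_def using G0 rho0 by (simp add: field_simps)
  have cond: "F.G * r + F.K * \<rho> ^ 2 \<le> \<rho>"
  proof -
    have "F.K * \<rho> ^ 2 = (F.K * \<rho>) * \<rho>" by (simp add: power2_eq_square)
    also have "\<dots> \<le> (1/2) * \<rho>" using Kr rho0 by (intro mult_right_mono) auto
    finally show ?thesis using Gr by simp
  qed
  have rad: "ereal r \<le> fps_conv_radius (F.A b)" if "b \<in> B" for b
    using F.A_radius[OF _ _ rho1 cond that] r0 rho0 by simp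
  have A0: "fps_nth (F.A b) 0 = 0" if "b \<in> B" for b using F.A_0[OF that] .
  have A1: "(\<Sum>b\<in>B. fps_nth (F.A b) 1 *\<^sub>R b) = u1" using F.A_1 \<gamma> by simp
  have MC0: "MC l (\<Sum>b\<in>B. eval_fps (F.A b) s *\<^sub>R b) = 0" if s: "\<bar>s\<bar> < r" for s
  proof -
    define x where "x b = eval_fps (F.A b) s" for b
    define u where "u = (\<Sum>b\<in>B. x b *\<^sub>R b)"
    have rads: "ereal (norm s) < fps_conv_radius (F.A b)" if "b \<in> B" for b
    proof -
      have "ereal (norm s) < ereal r" using s by simp
      then show ?thesis using rad[OF that] by (rule less_le_trans)
    qed
    have xb: "\<bar>x b\<bar> \<le> \<rho>" if "b \<in> B" for b
      unfolding x_def using F.A_eval_bound[OF _ _ rho1 cond that, of s] r0 rho0 s by simp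
    have xfix: "x b = \<gamma> b * s - (\<Sum>k\<in>{2..<N}. \<Sum>bs\<in>lsts B k. T k bs b * prod_list (map x bs))"
      if "b \<in> B" for b
      using F.Psi_eval[where F = F.A and s = s and b = b, OF rads] F.A_fix[OF that] unfolding x_def by simp
    have uV: "u \<in> Vd 0" unfolding u_def using BV by (intro sub_sum sub(2)) auto
    let ?P = "\<lambda>bs. prod_list (map x bs)"
    have "u = (\<Sum>b\<in>B. (\<gamma> b * s) *\<^sub>R b - (\<Sum>k\<in>{2..<N}. \<Sum>bs\<in>lsts B k. T k bs b * ?P bs) *\<^sub>R b)"
      unfolding u_def by (intro sum.cong refl) (simp add: xfix scaleR_diff_left)
    also have "\<dots> = s *\<^sub>R u1 - (\<Sum>b\<in>B. (\<Sum>k\<in>{2..<N}. \<Sum>bs\<in>lsts B k. T k bs b * ?P bs) *\<^sub>R b)"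
      unfolding sum_subtractf \<gamma> by (simp add: scaleR_sum_right mult.commute)
    also have "(\<Sum>b\<in>B. (\<Sum>k\<in>{2..<N}. \<Sum>bs\<in>lsts B k. T k bs b * ?P bs) *\<^sub>R b)
        = (\<Sum>b\<in>B. \<Sum>k\<in>{2..<N}. \<Sum>bs\<in>lsts B k. (T k bs b * ?P bs) *\<^sub>R b)"
      by (simp add: scaleR_sum_left)
    also have "\<dots> = (\<Sum>k\<in>{2..<N}. \<Sum>b\<in>B. \<Sum>bs\<in>lsts B k. (T k bs b * ?P bs) *\<^sub>R b)"
      by (rule sum.swap)
    also have "\<dots> = (\<Sum>k\<in>{2..<N}. \<Sum>bs\<in>lsts B k. \<Sum>b\<in>B. (T k bs b * ?P bs) *\<^sub>R b)"
      by (intro sum.cong refl sum.swap)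
    also have "\<dots> = (\<Sum>k\<in>{2..<N}. \<Sum>bs\<in>lsts B k. ?P bs *\<^sub>R ((1 / fact k) *\<^sub>R h1 (l k bs)))"
    proof (intro sum.cong refl)
      fix k bs assume bs: "bs \<in> lsts B k"
      have "(\<Sum>b\<in>B. (T k bs b * ?P bs) *\<^sub>R b) = (?P bs / fact k) *\<^sub>R (\<Sum>b\<in>B. tt k bs b *\<^sub>R b)"
        unfolding scaleR_sum_right by (intro sum.cong refl) (simp add: T_def)
      then show "(\<Sum>b\<in>B. (T k bs b * ?P bs) *\<^sub>R b) = ?P bs *\<^sub>R ((1 / fact k) *\<^sub>R h1 (l k bs))"
        using tt[OF bs] by simp
    qed
    also have "\<dots> = h1 (Rf u)"
    proof -
      have "h1 (Rf u) = (\<Sum>k\<in>{2..<N}. (1 / fact k) *\<^sub>R h1 (l k (replicate k u)))"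
        unfolding Rf_def by (simp add: linear_sum[OF h1(1)] linear_scale[OF h1(1)])
      also have "\<dots> = (\<Sum>k\<in>{2..<N}. (1 / fact k) *\<^sub>R h1 (\<Sum>bs\<in>lsts B k. ?P bs *\<^sub>R l k bs))"
        unfolding u_def lsts_def expand0[OF B(1)] ..
      also have "\<dots> = (\<Sum>k\<in>{2..<N}. \<Sum>bs\<in>lsts B k. ?P bs *\<^sub>R ((1 / fact k) *\<^sub>R h1 (l k bs)))"
        by (simp add: linear_sum[OF h1(1)] linear_scale[OF h1(1)] scaleR_sum_right mult.commute)
      finally show ?thesis by simp
    qed
    finally have ufix: "u = s *\<^sub>R u1 - h1 (Rf u)" .
    define y where "y = MC l u"
    have yV: "y \<in> Vd 1" unfolding y_def by (rule MC_in[OF uV])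
    have "y = h2 (l 1 [y])" unfolding y_def by (rule MC_eqs[OF uV ufix])
    also have "\<dots> = - (\<Sum>j\<in>{1..<N}. (1 / fact j) *\<^sub>R h2 (l (Suc j) (y # replicate j u)))"
      unfolding y_def l1_MC[OF uV]
      by (simp add: linear_sum[OF h2(1)] linear_scale[OF h2(1)] linear_neg[OF h2(1)])
    finally have yeq: "y = - (\<Sum>j\<in>{1..<N}. (1 / fact j) *\<^sub>R h2 (l (Suc j) (y # replicate j u)))" .
    have "y = 0"
      by (rule small_zero[OF B(1) BV fC C0(2) spC xb _ _ _ u_def yV yeq])
         (use rho0 rho1 Mr M_def in auto)
    then show ?thesis unfolding y_def u_def x_def .
  qed
  show ?thesis
    by (rule exI[of _ B], rule exI[of _ F.A], rule exI[of _ r])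
       (use B(1) BV r0 rad A0 A1 MC0 in auto)
qed

end

definition phi :: "real \<Rightarrow> real \<Rightarrow> real" where
  "phi c t = c - c * exp (- t / c)"

definition Pf :: "real \<Rightarrow> real fps" where
  "Pf c = 1 - fps_const (1 / c) * fps_X"

primrec Gk :: "real \<Rightarrow> real fps \<Rightarrow> nat \<Rightarrow> real fps" where
  "Gk c f 0 = f"
| "Gk c f (Suc k) = fps_deriv (Gk c f k) * Pf c"

lemma CX_radius: "fps_conv_radius (fps_const a * (fps_X :: real fps)) = \<infinity>"
proof -
  have "fps_conv_radius (fps_const a * fps_X) \<ge> min (fps_conv_radius (fps_const a)) (fps_conv_radius (fps_X :: real fps))"
    by (rule fps_conv_radius_mult)
  then show ?thesis by simp
qed

lemma Pf_radius: "fps_conv_radius (Pf c) = \<infinity>"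
proof -
  have a: "fps_conv_radius (fps_const (1 / c) * fps_X) \<ge> min (fps_conv_radius (fps_const (1 / c))) (fps_conv_radius (fps_X :: real fps))"
    by (rule fps_conv_radius_mult)
  have b: "fps_conv_radius (Pf c) \<ge> min (fps_conv_radius (1 :: real fps)) (fps_conv_radius (fps_const (1 / c) * fps_X))"
    unfolding Pf_def by (rule fps_conv_radius_diff)
  from a b show ?thesis by simp
qed

lemma Pf_eval: "eval_fps (Pf c) z = 1 - z / c"
proof -
  have "eval_fps (fps_const (1 / c) * fps_X) z = z / c"
    by (subst eval_fps_mult) auto
  then show ?thesis unfolding Pf_def by (subst eval_fps_diff) (auto simp: CX_radius)
qed

lemma Gk_radius: "fps_conv_radius (Gk c f k) \<ge> fps_conv_radius f"
proof (induction k)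
  case 0 then show ?case by simp
next
  case (Suc k)
  have "fps_conv_radius (fps_deriv (Gk c f k) * Pf c) \<ge> min (fps_conv_radius (fps_deriv (Gk c f k))) (fps_conv_radius (Pf c))"
    by (rule fps_conv_radius_mult)
  moreover have "fps_conv_radius (fps_deriv (Gk c f k)) \<ge> fps_conv_radius (Gk c f k)"
    by (rule fps_conv_radius_deriv)
  ultimately show ?case using Suc by (simp add: Pf_radius)
qed

lemma phi_range: "c > 0 \<Longrightarrow> t \<ge> 0 \<Longrightarrow> 0 \<le> phi c t \<and> phi c t < c"
proof -
  assume c: "c > 0" and t: "t \<ge> 0"
  have "exp (- t / c) \<le> 1" using c t by simp
  moreover have "exp (- t / c) > 0" by simp
  ultimately show ?thesis unfolding phi_def using c by (simp add: mult_le_cancel_left1)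
qed

lemma phi_deriv: "c > 0 \<Longrightarrow> (phi c has_real_derivative (1 - phi c t / c)) (at t)"
proof -
  assume c: "c > 0"
  have "((\<lambda>t. c - c * exp (- t / c)) has_real_derivative (0 - c * (exp (- t / c) * (- 1 / c)))) (at t)"
    using c by (intro derivative_eq_intros) auto
  moreover have "0 - c * (exp (- t / c) * (- 1 / c)) = 1 - phi c t / c"
    unfolding phi_def using c by (simp add: field_simps)
  ultimately show ?thesis unfolding phi_def[abs_def] by simp
qed

lemma Gk_deriv:
  assumes c: "c > 0" and rad: "ereal c \<le> fps_conv_radius f" and t: "t \<ge> 0"
  shows "((\<lambda>t. eval_fps (Gk c f k) (phi c t)) has_real_derivative eval_fps (Gk c f (Suc k)) (phi c t)) (at t)"
proof -
  have pr: "0 \<le> phi c t" "phi c t < c" using phi_range[OF c t] by auto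
  have "ereal (norm (phi c t)) < ereal c" using pr by simp
  also have "\<dots> \<le> fps_conv_radius (Gk c f k)" using rad Gk_radius[of f c k] by (rule order_trans)
  finally have r1: "norm (phi c t) < fps_conv_radius (Gk c f k)" .
  have r2: "norm (phi c t) < fps_conv_radius (fps_deriv (Gk c f k))"
    using r1 fps_conv_radius_deriv[of "Gk c f k"] by (rule less_le_trans)
  have d1: "(eval_fps (Gk c f k) has_real_derivative eval_fps (fps_deriv (Gk c f k)) (phi c t)) (at (phi c t))"
    by (rule has_field_derivative_eval_fps[OF r1])
  have "((\<lambda>t. eval_fps (Gk c f k) (phi c t)) has_real_derivative
      eval_fps (fps_deriv (Gk c f k)) (phi c t) * (1 - phi c t / c)) (at t)"
    by (rule DERIV_chain2[OF d1 phi_deriv[OF c]])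
  moreover have "eval_fps (Gk c f (Suc k)) (phi c t) = eval_fps (fps_deriv (Gk c f k)) (phi c t) * (1 - phi c t / c)"
    using r2 by (simp add: eval_fps_mult Pf_radius Pf_eval)
  ultimately show ?thesis by simp
qed

lemma smooth_curve:
  fixes B :: "'v::real_normed_vector set" and A :: "'v \<Rightarrow> real fps"
  assumes B: "finite B" and c: "c > 0" and rad: "\<And>b. b \<in> B \<Longrightarrow> ereal c \<le> fps_conv_radius (A b)"
  defines "D \<equiv> \<lambda>k t. (\<Sum>b\<in>B. eval_fps (Gk c (A b) k) (phi c t) *\<^sub>R b)"
  shows "\<And>k t. t \<ge> 0 \<Longrightarrow> (D k has_vector_derivative D (Suc k) t) (at t)"
proof -
  fix k t assume t: "(t::real) \<ge> 0"
  have "((\<lambda>t. eval_fps (Gk c (A b) k) (phi c t) *\<^sub>R b) has_vector_derivative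
      eval_fps (Gk c (A b) (Suc k)) (phi c t) *\<^sub>R b) (at t)" if "b \<in> B" for b
  proof -
    have "((\<lambda>t. eval_fps (Gk c (A b) k) (phi c t) *\<^sub>R b) has_vector_derivative
       eval_fps (Gk c (A b) k) (phi c t) *\<^sub>R 0 + eval_fps (Gk c (A b) (Suc k)) (phi c t) *\<^sub>R b) (at t)"
      by (rule has_vector_derivative_scaleR[OF Gk_deriv[OF c rad[OF that] t] has_vector_derivative_const])
    then show ?thesis by simp
  qed
  then show "(D k has_vector_derivative D (Suc k) t) (at t)"
    unfolding D_def by (rule has_vector_derivative_sum)
qed

theorem theorem5p16:
  fixes Vd :: "int \<Rightarrow> 'v::real_normed_vector set"
    and l :: "nat \<Rightarrow> 'v list \<Rightarrow> 'v"
    and N :: nat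
    and h1 h2 :: "'v \<Rightarrow> 'v"
    and u1 :: 'v
  assumes Linf: "Linf_algebra Vd l"
    and strict: "\<forall>k\<ge>N. \<forall>xs. l k xs = 0"
    and findim: "\<forall>d. \<exists>B. finite B \<and> Vd d = span B"
    and H1_zero: "{x \<in> Vd 1. l 1 [x] = 0} = (\<lambda>x. l 1 [x]) ` Vd 0"
    and h1: "linear h1" "h1 ` Vd 1 \<subseteq> Vd 0"
    and h2: "linear h2" "h2 ` Vd 2 \<subseteq> Vd 1"
    and homotopy: "\<forall>x\<in>Vd 1. l 1 [h1 x] + h2 (l 1 [x]) = x"
    and u1: "u1 \<in> Vd 0" "l 1 [u1] = 0"
    and small: "12 * norm u1 * opnorm_on (Vd 1) h1 * alpha_l Vd l N < 1"
  shows "\<exists>u :: real \<Rightarrow> 'v. Cinf_on {0..<2} u \<and> u 0 = 0 \<and>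
           (\<forall>t\<in>{0..<2}. u t \<in> Vd 0 \<and> MC l (u t) = 0) \<and>
           (u has_vector_derivative u1) (at 0 within {0..<2})"
proof -
  interpret M: MAIN Vd l N h1 h2 u1
    by (rule MAIN.intro[OF LA.intro[where Vd=Vd and l=l and N=N, OF Linf strict]
          MAIN_axioms.intro[where Vd=Vd and l=l, OF findim h1 h2 homotopy u1]])
  obtain B A r where B: "finite B" "B \<subseteq> Vd 0" and r0: "r > 0"
    and rad: "\<And>b. b \<in> B \<Longrightarrow> ereal r \<le> fps_conv_radius (A b)"
    and A0: "\<And>b. b \<in> B \<Longrightarrow> fps_nth (A b) 0 = 0"
    and A1: "(\<Sum>b\<in>B. fps_nth (A b) 1 *\<^sub>R b) = u1"
    and MC0: "\<And>s. \<bar>s\<bar> < r \<Longrightarrow> MC l (\<Sum>b\<in>B. eval_fps (A b) s *\<^sub>R b) = 0"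
    using M.local_curve by blast
  define c where "c = r / 2"
  have c0: "c > 0" unfolding c_def using r0 by simp
  have radc: "ereal c \<le> fps_conv_radius (A b)" if "b \<in> B" for b
  proof -
    have "ereal c \<le> ereal r" unfolding c_def using r0 by simp
    then show ?thesis using rad[OF that] by (rule order_trans)
  qed
  define D where "D = (\<lambda>k t. \<Sum>b\<in>B. eval_fps (Gk c (A b) k) (phi c t) *\<^sub>R b)"
  define U where "U = D 0"
  let ?S = "{0..<2::real}"
  have Dd: "(D k has_vector_derivative D (Suc k) t) (at t within ?S)" if "t \<in> ?S" for k t
    using smooth_curve[OF B(1) c0 radc, where k=k and t=t] that unfolding D_def
    by (auto intro: has_vector_derivative_at_within)
  have C: "Cinf_on ?S U"
    unfolding Cinf_on_def U_def using Dd by blast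
  have U_eq: "U t = (\<Sum>b\<in>B. eval_fps (A b) (phi c t) *\<^sub>R b)" for t
    unfolding U_def D_def by simp
  have U0: "U 0 = 0"
    unfolding U_eq using A0 by (simp add: phi_def eval_fps_at_0)
  have UMC: "U t \<in> Vd 0 \<and> MC l (U t) = 0" if "t \<in> ?S" for t
  proof
    show "U t \<in> Vd 0" unfolding U_eq using B(2) by (intro M.sub_sum M.sub(2)) auto
    have "0 \<le> phi c t" "phi c t < c" using phi_range[OF c0, of t] that by auto
    then have "\<bar>phi c t\<bar> < r" unfolding c_def using r0 by simp
    then show "MC l (U t) = 0" unfolding U_eq by (rule MC0)
  qed
  have D10: "D 1 0 = u1"
    unfolding D_def A1[symmetric]
    by (intro sum.cong refl) (simp add: phi_def eval_fps_at_0 Pf_def fps_deriv_nth)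
  have "(U has_vector_derivative u1) (at 0 within ?S)"
    using Dd[of 0 0] D10 unfolding U_def by simp
  then show ?thesis using C U0 UMC by blast
qed


end
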